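(* Let $d\in\mathbb{N}$ and $c=500d+10^6$. For every positive integer $N$ and every $X\subseteq[N]^d$, there exists a partial coloring $\chi:X\to\{-1,0,1\}$ that assigns $\pm1$ to at least $|X|/10$ elements of $X$ and satisfies \[ \max_{A_0\in\mathcal{A}_d}|\chi(A_0\cap X)|\le cN^{\frac{d}{2d+2}}. \]
   Context: $[N]=\{1,\dots,N\}$. An arithmetic progression in $d$ dimensions is a set $\{\mathbf{a}+i\mathbf{b}: i=0,\dots,l-1\}$ with $\mathbf{a},\mathbf{b}\in\mathbb{Z}^d$, $\mathbf{b}\ne\mathbf{0}$, $l\in\mathbb{N}$; $\mathcal{A}_d$ is the family of such progressions contained in $[N]^d$. For $\chi:X\to\{-1,0,1\}$ and $A\subseteq X$, $\chi(A)=\sum_{x\in A}\chi(x)$. *)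

theory Defs
  imports Complex_Main
begin

text \<open>Points of Z^d are represented as integer lists of length d.\<close>

definition grid :: "nat \<Rightarrow> nat \<Rightarrow> int list set" where
  "grid d N = {x. length x = d \<and> (\<forall>i<d. 1 \<le> x ! i \<and> x ! i \<le> int N)}"

definition vadd :: "int list \<Rightarrow> int list \<Rightarrow> int list" where
  "vadd a b = map2 (+) a b"

definition vsmul :: "int \<Rightarrow> int list \<Rightarrow> int list" where
  "vsmul k b = map ((*) k) b"

definition progression :: "int list \<Rightarrow> int list \<Rightarrow> nat \<Rightarrow> int list set" where
  "progression a b l = {vadd a (vsmul (int i) b) | i. i < l}"

definition APs :: "nat \<Rightarrow> nat \<Rightarrow> int list set set" where
  "APs d N = {progression a b l | a b l.
      length a = d \<and> length b = d \<and> b \<noteq> replicate d 0 \<and> l \<ge> 1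
      \<and> progression a b l \<subseteq> grid d N}"

definition chi_sum :: "(int list \<Rightarrow> int) \<Rightarrow> int list set \<Rightarrow> int" where
  "chi_sum \<chi> A = (\<Sum>x\<in>A. \<chi> x)"

end

theory Submission
  imports Defs "HOL-Library.FuncSet"
begin

definition cnt :: "'w set \<Rightarrow> ('w \<Rightarrow> 'b) \<Rightarrow> 'w \<Rightarrow> nat" where
  "cnt \<Omega> Y \<omega> = card {\<omega>'\<in>\<Omega>. Y \<omega>' = Y \<omega>}"

definition ent :: "'w set \<Rightarrow> ('w \<Rightarrow> 'b) \<Rightarrow> real" where
  "ent \<Omega> Y = (\<Sum>\<omega>\<in>\<Omega>. ln (card \<Omega> / cnt \<Omega> Y \<omega>)) / card \<Omega>"

lemma cnt_pos: "finite \<Omega> \<Longrightarrow> \<omega> \<in> \<Omega> \<Longrightarrow> cnt \<Omega> Y \<omega> > 0"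
  unfolding cnt_def by (subst card_gt_0_iff) auto

lemma cnt_le: "finite \<Omega> \<Longrightarrow> cnt \<Omega> Y \<omega> \<le> card \<Omega>"
  unfolding cnt_def by (rule card_mono) auto

lemma sum_group_cnt:
  assumes "finite \<Omega>"
  shows "(\<Sum>\<omega>\<in>\<Omega>. g (Y \<omega>) / real (cnt \<Omega> Y \<omega>)) = (\<Sum>v\<in>Y`\<Omega>. g v)"
proof -
  have "(\<Sum>\<omega>\<in>\<Omega>. g (Y \<omega>) / real (cnt \<Omega> Y \<omega>))
      = (\<Sum>v\<in>Y`\<Omega>. \<Sum>\<omega>\<in>{\<omega>\<in>\<Omega>. Y \<omega> = v}. g (Y \<omega>) / real (cnt \<Omega> Y \<omega>))"
    using assms by (rule sum.image_gen)
  also have "\<dots> = (\<Sum>v\<in>Y`\<Omega>. g v)"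
  proof (rule sum.cong[OF refl])
    fix v assume v: "v \<in> Y`\<Omega>"
    have ne: "card {\<omega>\<in>\<Omega>. Y \<omega> = v} > 0" using v assms by (subst card_gt_0_iff) auto
    have "(\<Sum>\<omega>\<in>{\<omega>\<in>\<Omega>. Y \<omega> = v}. g (Y \<omega>) / real (cnt \<Omega> Y \<omega>))
        = (\<Sum>\<omega>\<in>{\<omega>\<in>\<Omega>. Y \<omega> = v}. g v / real (card {\<omega>\<in>\<Omega>. Y \<omega> = v}))"
      by (rule sum.cong) (auto simp: cnt_def)
    also have "\<dots> = g v" using ne by simp
    finally show "(\<Sum>\<omega>\<in>{\<omega>\<in>\<Omega>. Y \<omega> = v}. g (Y \<omega>) / real (cnt \<Omega> Y \<omega>)) = g v" .
  qed
  finally show ?thesis .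
qed

lemma gibbs:
  assumes fin: "finite \<Omega>" and ne: "\<Omega> \<noteq> {}"
    and qpos: "\<And>v. v \<in> Y`\<Omega> \<Longrightarrow> q v > 0" and qsum: "(\<Sum>v\<in>Y`\<Omega>. q v) \<le> 1"
  shows "ent \<Omega> Y \<le> (\<Sum>\<omega>\<in>\<Omega>. - ln (q (Y \<omega>))) / card \<Omega>"
proof -
  let ?n = "real (card \<Omega>)"
  have npos: "?n > 0" using fin ne by (simp add: card_gt_0_iff)
  have "(\<Sum>\<omega>\<in>\<Omega>. ln (?n / cnt \<Omega> Y \<omega>)) - (\<Sum>\<omega>\<in>\<Omega>. - ln (q (Y \<omega>)))
      = (\<Sum>\<omega>\<in>\<Omega>. ln (?n * q (Y \<omega>) / cnt \<Omega> Y \<omega>))"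
  proof -
    have "\<And>\<omega>. \<omega> \<in> \<Omega> \<Longrightarrow> ln (?n / cnt \<Omega> Y \<omega>) - - ln (q (Y \<omega>)) = ln (?n * q (Y \<omega>) / cnt \<Omega> Y \<omega>)"
    proof -
      fix \<omega> assume w: "\<omega> \<in> \<Omega>"
      have c: "real (cnt \<Omega> Y \<omega>) > 0" using cnt_pos[OF fin w] by simp
      have qq: "q (Y \<omega>) > 0" using qpos w by auto
      show "ln (?n / cnt \<Omega> Y \<omega>) - - ln (q (Y \<omega>)) = ln (?n * q (Y \<omega>) / cnt \<Omega> Y \<omega>)"
        using c qq npos by (simp add: ln_div ln_mult)
    qed
    then show ?thesis by (simp add: sum_subtractf[symmetric])
  qed
  also have "\<dots> \<le> (\<Sum>\<omega>\<in>\<Omega>. ?n * q (Y \<omega>) / cnt \<Omega> Y \<omega> - 1)"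
  proof (rule sum_mono)
    fix \<omega> assume w: "\<omega> \<in> \<Omega>"
    have c: "real (cnt \<Omega> Y \<omega>) > 0" using cnt_pos[OF fin w] by simp
    have qq: "q (Y \<omega>) > 0" using qpos w by auto
    show "ln (?n * q (Y \<omega>) / cnt \<Omega> Y \<omega>) \<le> ?n * q (Y \<omega>) / cnt \<Omega> Y \<omega> - 1"
      by (rule ln_le_minus_one) (use c qq npos in simp)
  qed
  also have "\<dots> = ?n * (\<Sum>\<omega>\<in>\<Omega>. q (Y \<omega>) / cnt \<Omega> Y \<omega>) - ?n"
    by (simp add: sum_subtractf sum_distrib_left)
  also have "\<dots> = ?n * (\<Sum>v\<in>Y`\<Omega>. q v) - ?n"
    using sum_group_cnt[OF fin, of q Y] by simp
  also have "\<dots> \<le> 0" using qsum npos by (simp add: mult_left_le)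
  finally have "(\<Sum>\<omega>\<in>\<Omega>. ln (?n / cnt \<Omega> Y \<omega>)) \<le> (\<Sum>\<omega>\<in>\<Omega>. - ln (q (Y \<omega>)))" by simp
  then show ?thesis unfolding ent_def using npos by (simp add: divide_right_mono)
qed

lemma ent_cong:
  assumes "\<And>\<omega> \<omega>'. \<omega> \<in> \<Omega> \<Longrightarrow> \<omega>' \<in> \<Omega> \<Longrightarrow> (Y \<omega> = Y \<omega>') = (Y' \<omega> = Y' \<omega>')"
  shows "ent \<Omega> Y = ent \<Omega> Y'"
proof -
  have "cnt \<Omega> Y \<omega> = cnt \<Omega> Y' \<omega>" if "\<omega> \<in> \<Omega>" for \<omega>
  proof -
    have "{\<omega>'\<in>\<Omega>. Y \<omega>' = Y \<omega>} = {\<omega>'\<in>\<Omega>. Y' \<omega>' = Y' \<omega>}"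
      using assms[OF _ that] by blast
    then show ?thesis unfolding cnt_def by simp
  qed
  then show ?thesis unfolding ent_def by (simp cong: sum.cong)
qed

lemma ent_const: "(\<And>\<omega>. \<omega> \<in> \<Omega> \<Longrightarrow> Y \<omega> = c) \<Longrightarrow> ent \<Omega> Y = 0"
proof -
  assume h: "\<And>\<omega>. \<omega> \<in> \<Omega> \<Longrightarrow> Y \<omega> = c"
  have "cnt \<Omega> Y \<omega> = card \<Omega>" if "\<omega> \<in> \<Omega>" for \<omega>
  proof -
    have "{\<omega>'\<in>\<Omega>. Y \<omega>' = Y \<omega>} = \<Omega>" using h that by auto
    then show ?thesis unfolding cnt_def by simp
  qed
  then show ?thesis unfolding ent_def by (simp cong: sum.cong)
qed

lemma ent_nonneg: "finite \<Omega> \<Longrightarrow> ent \<Omega> Y \<ge> 0"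
  unfolding ent_def
  apply (rule divide_nonneg_nonneg)
   apply (rule sum_nonneg)
  subgoal for \<omega> using cnt_pos[of \<Omega> \<omega> Y] cnt_le[of \<Omega> Y \<omega>] by simp
  by simp

lemma ent_pair:
  assumes fin: "finite \<Omega>" and ne: "\<Omega> \<noteq> {}"
  shows "ent \<Omega> (\<lambda>\<omega>. (Y1 \<omega>, Y2 \<omega>)) \<le> ent \<Omega> Y1 + ent \<Omega> Y2"
proof -
  let ?n = "real (card \<Omega>)"
  have npos: "?n > 0" using fin ne by (simp add: card_gt_0_iff)
  define p1 where "p1 u = real (card {\<omega>\<in>\<Omega>. Y1 \<omega> = u}) / ?n" for u
  define p2 where "p2 v = real (card {\<omega>\<in>\<Omega>. Y2 \<omega> = v}) / ?n" for v
  define q where "q = (\<lambda>(u,v). p1 u * p2 v)"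
  have s1: "(\<Sum>u\<in>Y1`\<Omega>. p1 u) = 1"
  proof -
    have "(\<Sum>u\<in>Y1`\<Omega>. real (card {\<omega>\<in>\<Omega>. Y1 \<omega> = u})) = (\<Sum>\<omega>\<in>\<Omega>. 1 / real (cnt \<Omega> Y1 \<omega>) * real (cnt \<Omega> Y1 \<omega>))"
      using sum_group_cnt[OF fin, of "\<lambda>u. real (card {\<omega>\<in>\<Omega>. Y1 \<omega> = u})" Y1]
      by (simp add: cnt_def)
    also have "\<dots> = ?n"
    proof -
      have "(\<Sum>\<omega>\<in>\<Omega>. 1 / real (cnt \<Omega> Y1 \<omega>) * real (cnt \<Omega> Y1 \<omega>)) = (\<Sum>\<omega>\<in>\<Omega>. 1)"
        by (rule sum.cong[OF refl]) (use cnt_pos[OF fin, of _ Y1] in force)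
      then show ?thesis by simp
    qed
    finally show ?thesis unfolding p1_def using npos by (simp add: sum_divide_distrib[symmetric])
  qed
  have s2: "(\<Sum>u\<in>Y2`\<Omega>. p2 u) = 1"
  proof -
    have "(\<Sum>u\<in>Y2`\<Omega>. real (card {\<omega>\<in>\<Omega>. Y2 \<omega> = u})) = (\<Sum>\<omega>\<in>\<Omega>. 1 / real (cnt \<Omega> Y2 \<omega>) * real (cnt \<Omega> Y2 \<omega>))"
      using sum_group_cnt[OF fin, of "\<lambda>u. real (card {\<omega>\<in>\<Omega>. Y2 \<omega> = u})" Y2]
      by (simp add: cnt_def)
    also have "\<dots> = ?n"
    proof -
      have "(\<Sum>\<omega>\<in>\<Omega>. 1 / real (cnt \<Omega> Y2 \<omega>) * real (cnt \<Omega> Y2 \<omega>)) = (\<Sum>\<omega>\<in>\<Omega>. 1)"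
        by (rule sum.cong[OF refl]) (use cnt_pos[OF fin, of _ Y2] in force)
      then show ?thesis by simp
    qed
    finally show ?thesis unfolding p2_def using npos by (simp add: sum_divide_distrib[symmetric])
  qed
  have p1pos: "p1 (Y1 \<omega>) > 0" if "\<omega> \<in> \<Omega>" for \<omega>
    using cnt_pos[OF fin that, of Y1] npos unfolding p1_def cnt_def by simp
  have p2pos: "p2 (Y2 \<omega>) > 0" if "\<omega> \<in> \<Omega>" for \<omega>
    using cnt_pos[OF fin that, of Y2] npos unfolding p2_def cnt_def by simp
  have "ent \<Omega> (\<lambda>\<omega>. (Y1 \<omega>, Y2 \<omega>)) \<le> (\<Sum>\<omega>\<in>\<Omega>. - ln (q (Y1 \<omega>, Y2 \<omega>))) / card \<Omega>"
  proof (rule gibbs[OF fin ne])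
    show "\<And>v. v \<in> (\<lambda>\<omega>. (Y1 \<omega>, Y2 \<omega>)) ` \<Omega> \<Longrightarrow> 0 < q v"
      using p1pos p2pos unfolding q_def by auto
    have "(\<Sum>v\<in>(\<lambda>\<omega>. (Y1 \<omega>, Y2 \<omega>)) ` \<Omega>. q v) \<le> (\<Sum>v\<in>Y1`\<Omega> \<times> Y2`\<Omega>. q v)"
    proof (rule sum_mono2)
      show "finite (Y1 ` \<Omega> \<times> Y2 ` \<Omega>)" using fin by simp
      show "(\<lambda>\<omega>. (Y1 \<omega>, Y2 \<omega>)) ` \<Omega> \<subseteq> Y1 ` \<Omega> \<times> Y2 ` \<Omega>" by blast
      show "\<And>b. b \<in> Y1 ` \<Omega> \<times> Y2 ` \<Omega> - (\<lambda>\<omega>. (Y1 \<omega>, Y2 \<omega>)) ` \<Omega> \<Longrightarrow> 0 \<le> q b"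
        unfolding q_def p1_def p2_def by auto
    qed
    also have "\<dots> = (\<Sum>u\<in>Y1`\<Omega>. p1 u) * (\<Sum>v\<in>Y2`\<Omega>. p2 v)"
      unfolding q_def by (simp add: sum_product sum.cartesian_product)
    finally show "(\<Sum>v\<in>(\<lambda>\<omega>. (Y1 \<omega>, Y2 \<omega>)) ` \<Omega>. q v) \<le> 1" using s1 s2 by simp
  qed
  also have "\<dots> = ent \<Omega> Y1 + ent \<Omega> Y2"
  proof -
    have "\<And>\<omega>. \<omega> \<in> \<Omega> \<Longrightarrow> - ln (q (Y1 \<omega>, Y2 \<omega>)) = ln (?n / cnt \<Omega> Y1 \<omega>) + ln (?n / cnt \<Omega> Y2 \<omega>)"
    proof -
      fix \<omega> assume w: "\<omega> \<in> \<Omega>"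
      have a: "p1 (Y1 \<omega>) = cnt \<Omega> Y1 \<omega> / ?n" unfolding p1_def cnt_def by simp
      have b: "p2 (Y2 \<omega>) = cnt \<Omega> Y2 \<omega> / ?n" unfolding p2_def cnt_def by simp
      have c1: "real (cnt \<Omega> Y1 \<omega>) > 0" using cnt_pos[OF fin w] by simp
      have c2: "real (cnt \<Omega> Y2 \<omega>) > 0" using cnt_pos[OF fin w] by simp
      show "- ln (q (Y1 \<omega>, Y2 \<omega>)) = ln (?n / cnt \<Omega> Y1 \<omega>) + ln (?n / cnt \<Omega> Y2 \<omega>)"
        unfolding q_def using a b c1 c2 npos by (simp add: ln_mult ln_div)
    qed
    then show ?thesis unfolding ent_def by (simp add: sum.distrib add_divide_distrib cong: sum.cong)
  qed
  finally show ?thesis .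
qed

lemma ent_family:
  assumes fin: "finite \<Omega>" and ne: "\<Omega> \<noteq> {}" and I: "finite I"
  shows "ent \<Omega> (\<lambda>\<omega>. (\<lambda>i. if i \<in> I then Y i \<omega> else (0::int))) \<le> (\<Sum>i\<in>I. ent \<Omega> (Y i))"
  using I
proof (induction I rule: finite_induct)
  case empty
  then show ?case by (simp add: ent_const)
next
  case (insert j I)
  have "ent \<Omega> (\<lambda>\<omega>. (\<lambda>i. if i \<in> insert j I then Y i \<omega> else 0))
      = ent \<Omega> (\<lambda>\<omega>. (Y j \<omega>, (\<lambda>i. if i \<in> I then Y i \<omega> else 0)))"
  proof (rule ent_cong)
    fix \<omega> \<omega>'
    show "((\<lambda>i. if i \<in> insert j I then Y i \<omega> else 0) = (\<lambda>i. if i \<in> insert j I then Y i \<omega>' else 0)) =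
          ((Y j \<omega>, (\<lambda>i. if i \<in> I then Y i \<omega> else 0)) = (Y j \<omega>', (\<lambda>i. if i \<in> I then Y i \<omega>' else 0)))"
    proof
      assume h: "(\<lambda>i. if i \<in> insert j I then Y i \<omega> else 0) = (\<lambda>i. if i \<in> insert j I then Y i \<omega>' else 0)"
      have a: "Y j \<omega> = Y j \<omega>'" using fun_cong[OF h, of j] by simp
      have b: "(\<lambda>i. if i \<in> I then Y i \<omega> else 0) = (\<lambda>i. if i \<in> I then Y i \<omega>' else 0)"
      proof
        fix i show "(if i \<in> I then Y i \<omega> else 0) = (if i \<in> I then Y i \<omega>' else 0)"
          using fun_cong[OF h, of i] by (cases "i \<in> I") auto
      qed
      show "(Y j \<omega>, (\<lambda>i. if i \<in> I then Y i \<omega> else 0)) = (Y j \<omega>', (\<lambda>i. if i \<in> I then Y i \<omega>' else 0))"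
        using a b by simp
    next
      assume h: "(Y j \<omega>, (\<lambda>i. if i \<in> I then Y i \<omega> else 0)) = (Y j \<omega>', (\<lambda>i. if i \<in> I then Y i \<omega>' else 0))"
      then have a: "Y j \<omega> = Y j \<omega>'" and b0: "(\<lambda>i. if i \<in> I then Y i \<omega> else 0) = (\<lambda>i. if i \<in> I then Y i \<omega>' else (0::int))"
        by auto
      have b: "\<And>i. (if i \<in> I then Y i \<omega> else 0) = (if i \<in> I then Y i \<omega>' else (0::int))"
        using fun_cong[OF b0] by simp
      show "(\<lambda>i. if i \<in> insert j I then Y i \<omega> else 0) = (\<lambda>i. if i \<in> insert j I then Y i \<omega>' else 0)"
      proof
        fix i show "(if i \<in> insert j I then Y i \<omega> else 0) = (if i \<in> insert j I then Y i \<omega>' else 0)"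
          using a b[of i] by (cases "i = j"; cases "i \<in> I") auto
      qed
    qed
  qed
  also have "\<dots> \<le> ent \<Omega> (Y j) + ent \<Omega> (\<lambda>\<omega>. (\<lambda>i. if i \<in> I then Y i \<omega> else 0))"
    by (rule ent_pair[OF fin ne])
  also have "\<dots> \<le> ent \<Omega> (Y j) + (\<Sum>i\<in>I. ent \<Omega> (Y i))" using insert.IH by simp
  finally show ?case using insert.hyps by simp
qed

lemma ent_big_class:
  assumes fin: "finite \<Omega>" and ne: "\<Omega> \<noteq> {}"
  shows "\<exists>\<omega>\<in>\<Omega>. real (cnt \<Omega> Y \<omega>) \<ge> card \<Omega> * exp (- ent \<Omega> Y)"
proof (rule ccontr)
  assume "\<not> ?thesis"
  then have h: "\<And>\<omega>. \<omega> \<in> \<Omega> \<Longrightarrow> real (cnt \<Omega> Y \<omega>) < card \<Omega> * exp (- ent \<Omega> Y)" by force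
  let ?n = "real (card \<Omega>)"
  have npos: "?n > 0" using fin ne by (simp add: card_gt_0_iff)
  have "\<And>\<omega>. \<omega> \<in> \<Omega> \<Longrightarrow> ent \<Omega> Y < ln (?n / cnt \<Omega> Y \<omega>)"
  proof -
    fix \<omega> assume w: "\<omega> \<in> \<Omega>"
    have c: "real (cnt \<Omega> Y \<omega>) > 0" using cnt_pos[OF fin w] by simp
    have "ln (cnt \<Omega> Y \<omega>) < ln (?n * exp (- ent \<Omega> Y))"
      using h[OF w] c by simp
    then show "ent \<Omega> Y < ln (?n / cnt \<Omega> Y \<omega>)" using c npos by (simp add: ln_div ln_mult)
  qed
  then have "(\<Sum>\<omega>\<in>\<Omega>. ent \<Omega> Y) < (\<Sum>\<omega>\<in>\<Omega>. ln (?n / cnt \<Omega> Y \<omega>))"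
    using fin ne by (intro sum_strict_mono) auto
  then have "?n * ent \<Omega> Y < ?n * ent \<Omega> Y" unfolding ent_def using npos by simp
  then show False by simp
qed


definition Om :: "'a set \<Rightarrow> ('a \<Rightarrow> int) set" where
  "Om X = PiE X (\<lambda>_. {-1, 1})"

lemma card_Om: "finite X \<Longrightarrow> card (Om X) = 2 ^ card X"
  unfolding Om_def by (simp add: card_PiE numeral_2_eq_2)

lemma finite_Om: "finite X \<Longrightarrow> finite (Om X)"
  unfolding Om_def by (simp add: finite_PiE)

lemma Om_ne: "Om X \<noteq> {}"
  unfolding Om_def by (simp add: PiE_eq_empty_iff)

lemma Om_val: "\<omega> \<in> Om X \<Longrightarrow> x \<in> X \<Longrightarrow> \<omega> x = -1 \<or> \<omega> x = 1"
  unfolding Om_def by (auto simp: PiE_iff)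

lemma sinh_le_x_cosh:
  fixes x :: real assumes x: "x \<ge> 0"
  shows "sinh x \<le> x * cosh x"
proof -
  define \<psi> where "\<psi> t = t * cosh t - sinh t" for t :: real
  have d: "(\<psi> has_real_derivative t * sinh t) (at t)" for t
    unfolding \<psi>_def by (auto intro!: derivative_eq_intros simp: algebra_simps)
  have c: "continuous_on {0..x} \<psi>"
    by (rule continuous_at_imp_continuous_on) (use d DERIV_isCont in blast)
  have "\<psi> 0 \<le> \<psi> x"
  proof (rule DERIV_nonneg_imp_increasing_open[OF x _ c])
    fix t :: real assume "0 < t" "t < x"
    then show "\<exists>y. (\<psi> has_real_derivative y) (at t) \<and> 0 \<le> y" using d by (intro exI[of _ "t * sinh t"]) auto
  qed
  then show ?thesis unfolding \<psi>_def by simp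
qed

lemma cosh_le_exp_sq:
  fixes x :: real
  shows "cosh x \<le> exp (x^2/2)"
proof -
  have main: "cosh y \<le> exp (y^2/2)" if y: "y \<ge> 0" for y :: real
  proof -
    define q where "q t = cosh t * exp (- (t^2/2))" for t :: real
    have d: "(q has_real_derivative (sinh t - t * cosh t) * exp (- (t^2/2))) (at t)" for t
      unfolding q_def by (auto intro!: derivative_eq_intros simp: algebra_simps)
    have c: "continuous_on {0..y} q"
      by (rule continuous_at_imp_continuous_on) (use d DERIV_isCont in blast)
    have "q 0 \<ge> q y"
    proof (rule DERIV_nonpos_imp_decreasing_open[OF y _ c])
      fix t :: real assume t: "0 < t" "t < y"
      have "sinh t - t * cosh t \<le> 0" using sinh_le_x_cosh[of t] t by simp
      then have "(sinh t - t * cosh t) * exp (- (t^2/2)) \<le> 0" by (simp add: mult_nonpos_nonneg)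
      then show "\<exists>d. (q has_real_derivative d) (at t) \<and> d \<le> 0" using d by blast
    qed
    then have "cosh y * exp (- (y^2/2)) \<le> 1" unfolding q_def by simp
    then have "cosh y * exp (- (y^2/2)) * exp (y^2/2) \<le> 1 * exp (y^2/2)" by (intro mult_right_mono) auto
    then show ?thesis by (simp add: mult.assoc flip: exp_add)
  qed
  show ?thesis
  proof (cases "x \<ge> 0")
    case True then show ?thesis using main by simp
  next
    case False
    then have "cosh (-x) \<le> exp ((-x)^2/2)" using main[of "-x"] by simp
    then show ?thesis by simp
  qed
qed

lemma cosh_bound: "(exp (m::real) + exp (-m)) / 2 \<le> exp (m^2/2)"
  using cosh_le_exp_sq[of m] by (simp add: cosh_field_def)

lemma mgf:
  assumes X: "finite X" and S: "S \<subseteq> X"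
  shows "(\<Sum>\<omega>\<in>Om X. exp (\<mu> * (\<Sum>x\<in>S. real_of_int (\<omega> x)))) \<le> 2 ^ card X * exp (\<mu>^2 * card S / 2)"
proof -
  define f where "f x v = (if x \<in> S then exp (\<mu> * real_of_int v) else 1)" for x v
  have finS: "finite S" using X S finite_subset by blast
  have eq1: "exp (\<mu> * (\<Sum>x\<in>S. real_of_int (\<omega> x))) = (\<Prod>x\<in>X. f x (\<omega> x))" for \<omega>
  proof -
    have "exp (\<mu> * (\<Sum>x\<in>S. real_of_int (\<omega> x))) = (\<Prod>x\<in>S. exp (\<mu> * real_of_int (\<omega> x)))"
      using finS by (simp add: sum_distrib_left exp_sum)
    also have "\<dots> = (\<Prod>x\<in>X. f x (\<omega> x))"
      unfolding f_def using X S by (intro prod.mono_neutral_cong_left) auto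
    finally show ?thesis .
  qed
  have "(\<Sum>\<omega>\<in>Om X. exp (\<mu> * (\<Sum>x\<in>S. real_of_int (\<omega> x)))) = (\<Sum>\<omega>\<in>Om X. \<Prod>x\<in>X. f x (\<omega> x))"
    using eq1 by simp
  also have "\<dots> = (\<Prod>x\<in>X. \<Sum>v\<in>{-1,1}. f x v)"
    unfolding Om_def by (rule prod_sum_PiE[symmetric]) (use X in auto)
  also have "\<dots> \<le> (\<Prod>x\<in>X. 2 * (if x \<in> S then exp (\<mu>^2/2) else 1))"
  proof (rule prod_mono)
    fix x assume "x \<in> X"
    have "(\<Sum>v\<in>{-1::int,1}. f x v) = (if x \<in> S then exp (-\<mu>) + exp \<mu> else 2)"
      unfolding f_def by simp
    moreover have "exp (-\<mu>) + exp \<mu> \<le> 2 * exp (\<mu>^2/2)" using cosh_bound[of \<mu>] by simp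
    ultimately show "0 \<le> (\<Sum>v\<in>{-1,1}. f x v) \<and> (\<Sum>v\<in>{-1,1}. f x v) \<le> 2 * (if x \<in> S then exp (\<mu>^2/2) else 1)"
      by (auto simp: add_pos_pos less_imp_le)
  qed
  also have "\<dots> = 2 ^ card X * (\<Prod>x\<in>X. (if x \<in> S then exp (\<mu>^2/2) else 1))"
    by (simp add: prod.distrib)
  also have "(\<Prod>x\<in>X. (if x \<in> S then exp (\<mu>^2/2) else 1)) = (\<Prod>x\<in>S. exp (\<mu>^2/2))"
    using X S by (intro prod.mono_neutral_cong_right) auto
  also have "\<dots> = exp (\<mu>^2 * card S / 2)"
    by (simp add: exp_of_nat_mult[symmetric] mult.commute)
  finally show ?thesis by simp
qed

definition Zs :: "'a set \<Rightarrow> ('a \<Rightarrow> int) \<Rightarrow> real" where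
  "Zs S \<omega> = (\<Sum>x\<in>S. real_of_int (\<omega> x))"

lemma mgf_abs:
  assumes X: "finite X" and S: "S \<subseteq> X"
  shows "(\<Sum>\<omega>\<in>Om X. exp (\<mu> * \<bar>Zs S \<omega>\<bar>)) \<le> 2 * 2 ^ card X * exp (\<mu>^2 * card S / 2)"
proof -
  have "(\<Sum>\<omega>\<in>Om X. exp (\<mu> * \<bar>Zs S \<omega>\<bar>)) \<le> (\<Sum>\<omega>\<in>Om X. exp (\<mu> * Zs S \<omega>) + exp ((-\<mu>) * Zs S \<omega>))"
  proof (rule sum_mono)
    fix \<omega>
    show "exp (\<mu> * \<bar>Zs S \<omega>\<bar>) \<le> exp (\<mu> * Zs S \<omega>) + exp ((-\<mu>) * Zs S \<omega>)"
      by (cases "Zs S \<omega> \<ge> 0") (auto simp: add_increasing add_increasing2)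
  qed
  also have "\<dots> = (\<Sum>\<omega>\<in>Om X. exp (\<mu> * Zs S \<omega>)) + (\<Sum>\<omega>\<in>Om X. exp ((-\<mu>) * Zs S \<omega>))"
    by (simp add: sum.distrib)
  also have "\<dots> \<le> 2 ^ card X * exp (\<mu>^2 * card S / 2) + 2 ^ card X * exp ((-\<mu>)^2 * card S / 2)"
    unfolding Zs_def by (intro add_mono mgf X S)
  finally show ?thesis by simp
qed


lemma geom_int_sum:
  fixes r :: real
  assumes r: "0 < r" "r < 1" and F: "finite F"
  shows "(\<Sum>j\<in>F. r ^ nat \<bar>j\<bar>) \<le> (1+r)/(1-r)"
proof -
  let ?g = "\<lambda>j::int. r ^ nat \<bar>j\<bar>"
  have summ: "summable (\<lambda>k. r ^ k)" using r by (simp add: summable_geometric)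
  have sm: "(\<Sum>k. r ^ k) = 1 / (1 - r)" using r by (simp add: suminf_geometric)
  have split: "sum ?g F = sum ?g (F \<inter> {j. 0 \<le> j}) + sum ?g (F - {j. 0 \<le> j})"
    using F by (rule sum.Int_Diff)
  have p1: "sum ?g (F \<inter> {j. 0 \<le> j}) \<le> 1 / (1 - r)"
  proof -
    have inj: "inj_on nat (F \<inter> {j. 0 \<le> j})" by (auto simp: inj_on_def)
    have "sum ?g (F \<inter> {j. 0 \<le> j}) = sum (\<lambda>k. r ^ k) (nat ` (F \<inter> {j. 0 \<le> j}))"
      by (subst sum.reindex[OF inj]) (auto intro!: sum.cong)
    also have "\<dots> \<le> (\<Sum>k. r ^ k)"
      by (rule sum_le_suminf[OF summ]) (use F r in auto)
    finally show ?thesis using sm by simp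
  qed
  have p2: "sum ?g (F - {j. 0 \<le> j}) \<le> r / (1 - r)"
  proof -
    have inj: "inj_on (\<lambda>j. nat (-j-1)) (F - {j. 0 \<le> j})" by (auto simp: inj_on_def)
    have "sum ?g (F - {j. 0 \<le> j}) = (\<Sum>j\<in>F - {j. 0 \<le> j}. r * r ^ nat (-j-1))"
    proof (rule sum.cong[OF refl])
      fix j assume "j \<in> F - {j. 0 \<le> j}"
      then have "nat \<bar>j\<bar> = Suc (nat (-j-1))" by auto
      then show "r ^ nat \<bar>j\<bar> = r * r ^ nat (-j-1)" by simp
    qed
    also have "\<dots> = r * sum (\<lambda>k. r ^ k) ((\<lambda>j. nat (-j-1)) ` (F - {j. 0 \<le> j}))"
      by (subst sum.reindex[OF inj]) (simp add: sum_distrib_left)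
    also have "\<dots> \<le> r * (\<Sum>k. r ^ k)"
      by (intro mult_left_mono sum_le_suminf[OF summ]) (use F r in auto)
    finally show ?thesis using sm by simp
  qed
  have "sum ?g F \<le> 1/(1-r) + r/(1-r)" using split p1 p2 by linarith
  also have "\<dots> = (1+r)/(1-r)" by (simp add: add_divide_distrib)
  finally show ?thesis .
qed

lemma gibbs_geom:
  fixes Y :: "'w \<Rightarrow> int" and r :: real
  assumes fin: "finite \<Omega>" and ne: "\<Omega> \<noteq> {}" and r: "0 < r" "r < 1"
  shows "ent \<Omega> Y \<le> ln ((1+r)/(1-r)) + ln (1/r) * ((\<Sum>\<omega>\<in>\<Omega>. \<bar>real_of_int (Y \<omega>)\<bar>) / card \<Omega>)"
proof -
  define c where "c = (1-r)/(1+r)"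
  have c0: "c > 0" unfolding c_def using r by simp
  define q where "q j = c * r ^ nat \<bar>j\<bar>" for j :: int
  have npos: "real (card \<Omega>) > 0" using fin ne by (simp add: card_gt_0_iff)
  have "ent \<Omega> Y \<le> (\<Sum>\<omega>\<in>\<Omega>. - ln (q (Y \<omega>))) / card \<Omega>"
  proof (rule gibbs[OF fin ne])
    show "\<And>v. v \<in> Y ` \<Omega> \<Longrightarrow> 0 < q v" unfolding q_def using c0 r by simp
    have "(\<Sum>v\<in>Y ` \<Omega>. q v) = c * (\<Sum>v\<in>Y ` \<Omega>. r ^ nat \<bar>v\<bar>)" unfolding q_def by (simp add: sum_distrib_left)
    also have "\<dots> \<le> c * ((1+r)/(1-r))"
      by (intro mult_left_mono geom_int_sum) (use r fin c0 in auto)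
    also have "\<dots> = 1" unfolding c_def using r by simp
    finally show "(\<Sum>v\<in>Y ` \<Omega>. q v) \<le> 1" .
  qed
  also have "(\<Sum>\<omega>\<in>\<Omega>. - ln (q (Y \<omega>))) = (\<Sum>\<omega>\<in>\<Omega>. ln ((1+r)/(1-r)) + ln (1/r) * \<bar>real_of_int (Y \<omega>)\<bar>)"
  proof (rule sum.cong[OF refl])
    fix \<omega>
    have "ln (q (Y \<omega>)) = ln c + ln (r ^ nat \<bar>Y \<omega>\<bar>)" unfolding q_def using c0 r by (simp add: ln_mult)
    also have "ln (r ^ nat \<bar>Y \<omega>\<bar>) = real (nat \<bar>Y \<omega>\<bar>) * ln r" using r by (simp add: ln_realpow)
    also have "real (nat \<bar>Y \<omega>\<bar>) = \<bar>real_of_int (Y \<omega>)\<bar>" by simp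
    also have "ln c = - ln ((1+r)/(1-r))" unfolding c_def using r by (simp add: ln_div)
    finally show "- ln (q (Y \<omega>)) = ln ((1+r)/(1-r)) + ln (1/r) * \<bar>real_of_int (Y \<omega>)\<bar>"
      using r by (simp add: ln_div)
  qed
  also have "\<dots> = card \<Omega> * ln ((1+r)/(1-r)) + ln (1/r) * (\<Sum>\<omega>\<in>\<Omega>. \<bar>real_of_int (Y \<omega>)\<bar>)"
    by (simp add: sum.distrib sum_distrib_left)
  finally show ?thesis using npos by (simp add: add_divide_distrib)
qed

definition Yb :: "'a set \<Rightarrow> real \<Rightarrow> ('a \<Rightarrow> int) \<Rightarrow> int" where
  "Yb S dl \<omega> = \<lfloor>(Zs S \<omega> + dl) / (2*dl)\<rfloor>"

lemma Yb_abs: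
  assumes "dl > 0"
  shows "\<bar>real_of_int (Yb S dl \<omega>)\<bar> \<le> \<bar>Zs S \<omega>\<bar> / (2*dl) + 1/2"
proof -
  let ?t = "(Zs S \<omega> + dl) / (2*dl)"
  have a: "real_of_int (Yb S dl \<omega>) \<le> ?t" unfolding Yb_def by simp
  have b: "?t < real_of_int (Yb S dl \<omega>) + 1" unfolding Yb_def by linarith
  have t: "?t = Zs S \<omega> / (2*dl) + 1/2" using assms by (simp add: field_simps)
  have "\<bar>Zs S \<omega> / (2*dl)\<bar> = \<bar>Zs S \<omega>\<bar> / (2*dl)" using assms by simp
  then show ?thesis using a b t by linarith
qed

lemma Yb_zero:
  assumes "dl > 0" "\<bar>Zs S \<omega>\<bar> < dl"
  shows "Yb S dl \<omega> = 0"
proof -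
  have "0 \<le> (Zs S \<omega> + dl) / (2*dl)" using assms by simp
  moreover have "(Zs S \<omega> + dl) / (2*dl) < 1" using assms by (simp add: field_simps)
  ultimately show ?thesis unfolding Yb_def by (simp add: floor_eq_iff)
qed

lemma Yb_exp:
  assumes D: "dl > 0" and mu: "\<mu> \<ge> 1/dl"
  shows "\<bar>real_of_int (Yb S dl \<omega>)\<bar> \<le> exp (\<mu> * \<bar>Zs S \<omega>\<bar> - \<mu> * dl)"
proof (cases "\<bar>Zs S \<omega>\<bar> < dl")
  case True
  then show ?thesis using Yb_zero[OF D True] by simp
next
  case False
  let ?z = "\<bar>Zs S \<omega>\<bar>"
  have "\<bar>real_of_int (Yb S dl \<omega>)\<bar> \<le> ?z / (2*dl) + 1/2" by (rule Yb_abs[OF D])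
  also have "\<dots> \<le> ?z / dl" using False D by (simp add: field_simps)
  also have "\<dots> = 1 + (1/dl) * (?z - dl)" using D by (simp add: field_simps)
  also have "\<dots> \<le> 1 + \<mu> * (?z - dl)" using False mu by (intro add_left_mono mult_right_mono) auto
  also have "\<dots> \<le> exp (\<mu> * (?z - dl))" by (rule exp_ge_add_one_self)
  finally show ?thesis by (simp add: right_diff_distrib)
qed

lemma poly_exp_bound:
  fixes x :: real assumes "x \<ge> 0"
  shows "(6 + x) * x \<le> 88 * exp (x/4)"
proof -
  have e1: "1 + x/4 \<le> exp (x/4)" by (rule exp_ge_add_one_self)
  have e2: "1 + x/8 \<le> exp (x/8)" by (rule exp_ge_add_one_self)
  have "(1 + x/8)^2 \<le> exp (x/8) ^ 2" using e2 assms by (intro power_mono) auto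
  also have "exp (x/8) ^ 2 = exp (x/4)" by (simp add: power2_eq_square flip: exp_add)
  finally have e3: "(1 + x/8)^2 \<le> exp (x/4)" .
  have "x^2 / 64 \<le> (1 + x/8)^2" using assms by (simp add: power2_eq_square field_simps)
  then have a: "x^2 \<le> 64 * exp (x/4)" using e3 by linarith
  have b: "6*x \<le> 24 * exp (x/4)" using e1 by linarith
  have c: "(6+x)*x = 6*x + x^2" by (simp add: power2_eq_square algebra_simps)
  show ?thesis using a b c by linarith
qed


lemma block_ent:
  fixes X :: "'a set" and S :: "'a set" and LL dl :: real
  assumes X: "finite X" and S: "S \<subseteq> X" and sL: "real (card S) \<le> LL" and D: "dl > 0"
  shows "ent (Om X) (Yb S dl) \<le> 100 * (real (card S) / dl^2) * exp (- (dl^2) / (4*LL))"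
proof -
  define s where "s = real (card S)"
  define N2 where "N2 = real (card (Om X))"
  have finS: "finite S" using X S finite_subset by blast
  have N2pos: "N2 > 0" unfolding N2_def using finite_Om[OF X] Om_ne by (simp add: card_gt_0_iff)
  have mg: "(\<Sum>\<omega>\<in>Om X. exp (\<mu> * \<bar>Zs S \<omega>\<bar>)) \<le> 2 * N2 * exp (\<mu>^2 * s / 2)" for \<mu>
    using mgf_abs[OF X S, of \<mu>] unfolding N2_def s_def card_Om[OF X] by simp
  have finO: "finite (Om X)" using finite_Om[OF X] .
  show ?thesis
  proof (cases "s = 0")
    case True
    then have "S = {}" using finS unfolding s_def by simp
    then have "\<And>\<omega>. Yb S dl \<omega> = 0" unfolding Yb_def Zs_def using D by (simp add: floor_eq_iff)
    then have "ent (Om X) (Yb S dl) = 0" by (intro ent_const) auto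
    then show ?thesis using True unfolding s_def by simp
  next
    case False
    then have s0: "s > 0" unfolding s_def by simp
    have LL0: "LL > 0" using s0 sL unfolding s_def by simp
    show ?thesis
    proof (cases "dl^2 \<ge> s")
      case True
      define x where "x = dl^2 / s"
      have x1: "x \<ge> 1" unfolding x_def using True s0 by simp
      define \<theta> where "\<theta> = exp (- x / 2)"
      define \<mu> where "\<mu> = dl / s"
      have mu: "\<mu> \<ge> 1/dl" unfolding \<mu>_def using True s0 D by (simp add: field_simps power2_eq_square)
      have sumY: "(\<Sum>\<omega>\<in>Om X. \<bar>real_of_int (Yb S dl \<omega>)\<bar>) \<le> 2 * N2 * \<theta>"
      proof -
        have "(\<Sum>\<omega>\<in>Om X. \<bar>real_of_int (Yb S dl \<omega>)\<bar>) \<le> (\<Sum>\<omega>\<in>Om X. exp (-\<mu>*dl) * exp (\<mu> * \<bar>Zs S \<omega>\<bar>))"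
          by (rule sum_mono) (use Yb_exp[OF D mu] in \<open>simp add: exp_add[symmetric]\<close>)
        also have "\<dots> = exp (-\<mu>*dl) * (\<Sum>\<omega>\<in>Om X. exp (\<mu> * \<bar>Zs S \<omega>\<bar>))" by (simp add: sum_distrib_left)
        also have "\<dots> \<le> exp (-\<mu>*dl) * (2 * N2 * exp (\<mu>^2 * s / 2))" by (intro mult_left_mono mg) auto
        also have "\<dots> = 2 * N2 * exp (-\<mu>*dl + \<mu>^2 * s / 2)" by (simp only: exp_add mult_ac)
        also have "-\<mu>*dl + \<mu>^2 * s / 2 = - x / 2" unfolding \<mu>_def x_def using s0 by (simp add: field_simps power2_eq_square)
        finally show ?thesis unfolding \<theta>_def .
      qed
      have th0: "\<theta> > 0" unfolding \<theta>_def by simp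
      have th1: "\<theta> \<le> 2/3"
      proof -
        have "\<theta> \<le> exp (- 1/2::real)" unfolding \<theta>_def using x1 by simp
        also have "exp (- 1/2::real) = 1 / exp (1/2)" by (simp add: exp_minus field_simps)
        also have "\<dots> \<le> 1 / (1 + 1/2)" using exp_ge_add_one_self[of "1/2"] by (intro divide_left_mono) auto
        finally show ?thesis by simp
      qed
      have "ent (Om X) (Yb S dl) \<le> ln ((1+\<theta>)/(1-\<theta>)) + ln (1/\<theta>) * ((\<Sum>\<omega>\<in>Om X. \<bar>real_of_int (Yb S dl \<omega>)\<bar>) / N2)"
        unfolding N2_def by (rule gibbs_geom[OF finO Om_ne]) (use th0 th1 in auto)
      also have "\<dots> \<le> 6 * \<theta> + (x/2) * (2 * \<theta>)"
      proof (rule add_mono)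
        have "ln ((1+\<theta>)/(1-\<theta>)) \<le> (1+\<theta>)/(1-\<theta>) - 1" by (rule ln_le_minus_one) (use th0 th1 in auto)
        also have "\<dots> = 2*\<theta>/(1-\<theta>)" using th1 by (simp add: field_simps)
        also have "\<dots> \<le> 6 * \<theta>" using th0 th1 by (simp add: field_simps)
        finally show "ln ((1+\<theta>)/(1-\<theta>)) \<le> 6 * \<theta>" .
        have l: "ln (1/\<theta>) = x/2" unfolding \<theta>_def by (simp add: ln_div)
        show "ln (1/\<theta>) * ((\<Sum>\<omega>\<in>Om X. \<bar>real_of_int (Yb S dl \<omega>)\<bar>) / N2) \<le> (x/2) * (2 * \<theta>)"
          unfolding l using sumY N2pos x1 by (intro mult_left_mono) (auto simp: field_simps)
      qed
      also have "\<dots> = exp (-x/4) * ((6 + x) * exp (-x/4))"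
        unfolding \<theta>_def by (simp add: algebra_simps flip: exp_add)
      also have "\<dots> \<le> exp (- (dl^2) / (4*LL)) * (88 / x)"
      proof (rule mult_mono)
        have "dl^2 / (4*LL) \<le> dl^2 / (4 * s)" using sL s0 unfolding s_def by (intro divide_left_mono) auto
        then show "exp (-x/4) \<le> exp (- (dl^2) / (4*LL))" unfolding x_def by simp
        have "(6 + x) * x \<le> 88 * exp (x/4)" using poly_exp_bound x1 by simp
        then have "(6 + x) * x * exp (-x/4) \<le> 88 * exp (x/4) * exp (-x/4)" by (intro mult_right_mono) auto
        also have "88 * exp (x/4) * exp (-x/4) = 88" by (simp flip: exp_add)
        finally show "(6 + x) * exp (-x/4) \<le> 88 / x" using x1 by (simp add: field_simps)
      qed (use x1 in auto)
      also have "\<dots> \<le> 100 * (s / dl^2) * exp (- (dl^2) / (4*LL))"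
        unfolding x_def using s0 D by (simp add: field_simps)
      finally show ?thesis unfolding s_def .
    next
      case False
      define sq where "sq = sqrt s"
      have sq0: "sq > 0" unfolding sq_def using s0 by simp
      have sqs: "sq^2 = s" unfolding sq_def using s0 by simp
      have Dsq: "dl < sq"
      proof -
        have "dl^2 < sq^2" using False sqs by simp
        then show ?thesis using D sq0 by (simp add: power_less_imp_less_base less_imp_le)
      qed
      define J where "J = sq / dl"
      have J1: "J > 1" unfolding J_def using Dsq D by simp
      have sumZ: "(\<Sum>\<omega>\<in>Om X. \<bar>Zs S \<omega>\<bar>) \<le> 2 * N2 * sq"
      proof -
        have "(\<Sum>\<omega>\<in>Om X. \<bar>Zs S \<omega>\<bar>) \<le> (\<Sum>\<omega>\<in>Om X. sq * exp (-1) * exp ((1/sq) * \<bar>Zs S \<omega>\<bar>))"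
        proof (rule sum_mono)
          fix \<omega>
          have "\<bar>Zs S \<omega>\<bar> / sq \<le> exp (\<bar>Zs S \<omega>\<bar> / sq - 1)"
            using exp_ge_add_one_self[of "\<bar>Zs S \<omega>\<bar> / sq - 1"] by simp
          then have "\<bar>Zs S \<omega>\<bar> \<le> sq * exp (\<bar>Zs S \<omega>\<bar> / sq - 1)" using sq0 by (simp add: field_simps)
          then show "\<bar>Zs S \<omega>\<bar> \<le> sq * exp (-1) * exp ((1/sq) * \<bar>Zs S \<omega>\<bar>)"
            by (simp add: exp_diff exp_minus field_simps)
        qed
        also have "\<dots> = sq * exp (-1) * (\<Sum>\<omega>\<in>Om X. exp ((1/sq) * \<bar>Zs S \<omega>\<bar>))" by (simp add: sum_distrib_left)
        also have "\<dots> \<le> sq * exp (-1) * (2 * N2 * exp ((1/sq)^2 * s / 2))"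
          by (intro mult_left_mono mg) (use sq0 in auto)
        also have "(1/sq)^2 * s = 1" using sqs sq0 s0 by (simp add: field_simps)
        also have "sq * exp (-1) * (2 * N2 * exp (1 / 2)) = 2 * N2 * sq * exp (-1/2)"
          by (simp add: algebra_simps flip: exp_add)
        also have "\<dots> \<le> 2 * N2 * sq" using N2pos sq0 by simp
        finally show ?thesis .
      qed
      have sumY: "(\<Sum>\<omega>\<in>Om X. \<bar>real_of_int (Yb S dl \<omega>)\<bar>) / N2 \<le> J + 1/2"
      proof -
        have "(\<Sum>\<omega>\<in>Om X. \<bar>real_of_int (Yb S dl \<omega>)\<bar>) \<le> (\<Sum>\<omega>\<in>Om X. \<bar>Zs S \<omega>\<bar> / (2*dl) + 1/2)"
          by (rule sum_mono) (rule Yb_abs[OF D])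
        also have "\<dots> = (\<Sum>\<omega>\<in>Om X. \<bar>Zs S \<omega>\<bar>) / (2*dl) + N2 / 2"
          unfolding N2_def by (simp add: sum.distrib sum_divide_distrib)
        also have "\<dots> \<le> (2 * N2 * sq) / (2*dl) + N2 / 2"
          using divide_right_mono[OF sumZ, of "2*dl"] D by simp
        also have "\<dots> = N2 * (J + 1/2)" unfolding J_def using D by (simp add: field_simps)
        finally show ?thesis using N2pos by (simp add: field_simps)
      qed
      define r where "r = J / (J+1)"
      have r0: "0 < r" "r < 1" unfolding r_def using J1 by auto
      have "ent (Om X) (Yb S dl) \<le> ln ((1+r)/(1-r)) + ln (1/r) * ((\<Sum>\<omega>\<in>Om X. \<bar>real_of_int (Yb S dl \<omega>)\<bar>) / N2)"
        unfolding N2_def by (rule gibbs_geom[OF finO Om_ne]) (use r0 in auto)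
      also have "\<dots> \<le> 2*J + (1/J) * (J + 1/2)"
      proof (rule add_mono)
        have "(1+r)/(1-r) = 2*J+1" unfolding r_def using J1 by (simp add: field_simps)
        then have "ln ((1+r)/(1-r)) = ln (2*J+1)" by simp
        also have "\<dots> \<le> (2*J+1) - 1" by (rule ln_le_minus_one) (use J1 in auto)
        finally show "ln ((1+r)/(1-r)) \<le> 2*J" by simp
        have l1: "1/r = 1 + 1/J" unfolding r_def using J1 by (simp add: field_simps)
        have jp: "0 < 1 + 1/J" using J1 by (simp add: add_pos_pos)
        have l2: "ln (1/r) \<le> 1/J" unfolding l1 using ln_le_minus_one[OF jp] by simp
        have l3: "ln (1/r) \<ge> 0" unfolding l1 using J1 by simp
        show "ln (1/r) * ((\<Sum>\<omega>\<in>Om X. \<bar>real_of_int (Yb S dl \<omega>)\<bar>) / N2) \<le> (1/J) * (J + 1/2)"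
          using l2 l3 sumY J1 N2pos by (intro mult_mono) (auto intro!: divide_nonneg_pos sum_nonneg)
      qed
      also have "\<dots> \<le> 75 * J^2"
      proof -
        have "(1/J) * (J + 1/2) = 1 + 1/(2*J)" using J1 by (simp add: field_simps)
        also have "\<dots> \<le> 2" using J1 by (simp add: field_simps)
        finally have a: "(1/J) * (J + 1/2) \<le> 2" .
        have "J \<le> J^2" using J1 by (simp add: power2_eq_square)
        then show ?thesis using a J1 by linarith
      qed
      also have "\<dots> \<le> 100 * (s / dl^2) * exp (- (dl^2) / (4*LL))"
      proof -
        have j2: "s / dl^2 = J^2" unfolding J_def using sqs by (simp add: power_divide)
        have "dl^2 / (4*LL) \<le> 1/4"
        proof -
          have "dl^2 \<le> LL" using False sL unfolding s_def by linarith
          then show ?thesis using LL0 by (simp add: field_simps)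
        qed
        then have "3/4 \<le> exp (- (dl^2) / (4*LL))" using exp_ge_add_one_self[of "- (dl^2) / (4*LL)"] by linarith
        then have "100 * J^2 * (3/4) \<le> 100 * J^2 * exp (- (dl^2) / (4*LL))" by (intro mult_left_mono) auto
        then show ?thesis unfolding j2 by simp
      qed
      finally show ?thesis unfolding s_def .
    qed
  qed
qed


definition pt :: "int list \<Rightarrow> int list \<Rightarrow> int \<Rightarrow> int list" where
  "pt a b i = vadd a (vsmul i b)"

lemma len_pt: "length (pt a b i) = min (length a) (length b)"
  unfolding pt_def vadd_def vsmul_def by simp

lemma nth_pt: "c < length a \<Longrightarrow> c < length b \<Longrightarrow> pt a b i ! c = a!c + i * b!c"
  unfolding pt_def vadd_def vsmul_def by simp

lemma progression_eq: "progression a b l = (\<lambda>i. pt a b (int i)) ` {..<l}"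
  unfolding progression_def pt_def by auto

lemma pt_pt: "length a = length b \<Longrightarrow> pt (pt a b i) b j = pt a b (i+j)"
  by (rule nth_equalityI) (auto simp: len_pt nth_pt algebra_simps)

lemma pt_0: "length a = length b \<Longrightarrow> pt a b 0 = a"
  by (rule nth_equalityI) (auto simp: len_pt nth_pt)

lemma nonzero_coord:
  assumes "b \<noteq> replicate (length b) 0"
  shows "\<exists>c<length b. b!c \<noteq> 0"
proof (rule ccontr)
  assume "\<not> ?thesis"
  then have "b = replicate (length b) 0" by (intro nth_equalityI) auto
  then show False using assms by simp
qed

lemma pt_inj:
  assumes "length a = length b" "b \<noteq> replicate (length b) 0" "pt a b i = pt a b j"
  shows "i = j"
proof -
  obtain c where c: "c < length b" "b!c \<noteq> 0" using nonzero_coord[OF assms(2)] by blast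
  have "pt a b i ! c = pt a b j ! c" using assms(3) by simp
  then have "i * b!c = j * b!c" using c assms(1) by (simp add: nth_pt)
  then show ?thesis using c(2) by simp
qed

definition fc :: "int list \<Rightarrow> nat" where
  "fc b = (LEAST c. c < length b \<and> b!c \<noteq> 0)"

lemma fc: "b \<noteq> replicate (length b) 0 \<Longrightarrow> fc b < length b \<and> b!(fc b) \<noteq> 0"
  unfolding fc_def using nonzero_coord by (metis (mono_tags, lifting) LeastI_ex)

definition pos :: "nat \<Rightarrow> int list \<Rightarrow> int list \<Rightarrow> int" where
  "pos N b x = (if b!(fc b) > 0 then (x!(fc b) - 1) div (b!(fc b))
                else (int N - x!(fc b)) div (-(b!(fc b))))"

lemma pos_pt:
  assumes "length x = length b" "b \<noteq> replicate (length b) 0"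
  shows "pos N b (pt x b i) = pos N b x + i"
proof -
  define c where "c = fc b"
  have c: "c < length b" "b!c \<noteq> 0" using fc[OF assms(2)] unfolding c_def by auto
  have e: "pt x b i ! c = x!c + i * b!c" using c assms(1) by (simp add: nth_pt)
  show ?thesis
  proof (cases "b!c > 0")
    case True
    have "(x!c + i * b!c - 1) div b!c = ((x!c - 1) + i * b!c) div b!c" by (simp add: algebra_simps)
    also have "\<dots> = (x!c - 1) div b!c + i" using c by simp
    finally show ?thesis unfolding pos_def c_def[symmetric] e using True by simp
  next
    case False
    have "(int N - (x!c + i * b!c)) div (- b!c) = ((int N - x!c) + i * (- b!c)) div (- b!c)" by (simp add: algebra_simps)
    also have "\<dots> = i + (int N - x!c) div (- b!c)" by (rule div_mult_self1) (use c in simp)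
    finally show ?thesis unfolding pos_def c_def[symmetric] e using False by simp
  qed
qed

lemma pos_grid:
  assumes "x \<in> grid d N" "length b = d" "b \<noteq> replicate d 0"
  shows "0 \<le> pos N b x \<and> pos N b x \<le> int N - 1"
proof -
  define c where "c = fc b"
  have c: "c < d" "b!c \<noteq> 0" using fc[of b] assms(2,3) unfolding c_def by auto
  have x: "1 \<le> x!c" "x!c \<le> int N" using assms(1) c unfolding grid_def by auto
  show ?thesis
  proof (cases "b!c > 0")
    case True
    have "(x!c - 1) div b!c \<le> (x!c - 1) div 1" using x True by (intro zdiv_mono2) auto
    moreover have "0 \<le> (x!c - 1) div b!c" using x True by (simp add: pos_imp_zdiv_nonneg_iff)
    ultimately show ?thesis unfolding pos_def c_def[symmetric] using True x by simp
  next
    case False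
    then have bn: "- b!c > 0" using c by simp
    have "(int N - x!c) div (- b!c) \<le> (int N - x!c) div 1" using x bn by (intro zdiv_mono2) auto
    moreover have "0 \<le> (int N - x!c) div (- b!c)" using x bn by (simp add: pos_imp_zdiv_nonneg_iff)
    ultimately show ?thesis unfolding pos_def c_def[symmetric] using False x by simp
  qed
qed

lemma grid_len: "x \<in> grid d N \<Longrightarrow> length x = d"
  unfolding grid_def by simp

lemma blocks_disjoint:
  assumes a: "a \<in> grid d N" and a': "a' \<in> grid d N" and b: "length b = d" "b \<noteq> replicate d 0"
    and da: "(2::int)^k dvd pos N b a" and da': "(2::int)^k dvd pos N b a'" and ne: "a \<noteq> a'"
  shows "progression a b (2^k) \<inter> progression a' b (2^k) = {}"
proof (rule ccontr)
  assume "progression a b (2^k) \<inter> progression a' b (2^k) \<noteq> {}"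
  then obtain i i' where ii: "i < 2^k" "i' < 2^k" "pt a b (int i) = pt a' b (int i')"
    unfolding progression_eq by auto
  have la: "length a = length b" "length a' = length b" using a a' b grid_len by auto
  have br: "b \<noteq> replicate (length b) 0" using b by simp
  have "a' = pt (pt a' b (int i')) b (- int i')" using la by (simp add: pt_pt pt_0)
  also have "\<dots> = pt (pt a b (int i)) b (- int i')" using ii(3) by simp
  also have "\<dots> = pt a b (int i - int i')" using la by (simp add: pt_pt)
  finally have a'eq: "a' = pt a b (int i - int i')" .
  have "pos N b a' = pos N b a + (int i - int i')" using a'eq pos_pt[OF la(1) br] by simp
  then have "(2::int)^k dvd (int i - int i')" using da da'
    by (metis add_diff_cancel_left' dvd_diff)
  moreover have "\<bar>int i - int i'\<bar> < 2^k"
  proof -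
    have e: "(2::int)^k = int (2^k)" by simp
    show ?thesis unfolding e using ii by linarith
  qed
  ultimately have "int i - int i' = 0"
  proof -
    assume dv: "(2::int)^k dvd (int i - int i')" and lt: "\<bar>int i - int i'\<bar> < 2^k"
    show ?thesis
    proof (rule ccontr)
      assume nz: "int i - int i' \<noteq> 0"
      have "\<bar>(2::int)^k\<bar> \<le> \<bar>int i - int i'\<bar>" by (rule dvd_imp_le_int[OF nz dv])
      then show False using lt by simp
    qed
  qed
  then have "a' = a" using a'eq la by (simp add: pt_0)
  then show False using ne by simp
qed

lemma card_progression: "card (progression a b l) \<le> l"
  unfolding progression_eq using card_image_le[of "{..<l}" "\<lambda>i. pt a b (int i)"] by simp

lemma finite_progression: "finite (progression a b l)"
  unfolding progression_eq by simp


locale dyad =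
  fixes f :: "nat \<Rightarrow> real" and \<beta> :: "nat \<Rightarrow> real" and t0 t1 :: nat
  assumes b0: "\<And>k. \<beta> k \<ge> 0"
  assumes blk: "\<And>k m. t0 \<le> m*2^k \<Longrightarrow> (m+1)*2^k \<le> t1 \<Longrightarrow> \<bar>\<Sum>j\<in>{m*2^k..<(m+1)*2^k}. f j\<bar> \<le> \<beta> k"
begin

lemma blk': "t0 \<le> c \<Longrightarrow> c + 2^k \<le> t1 \<Longrightarrow> 2^k dvd c \<Longrightarrow> \<bar>\<Sum>j\<in>{c..<c+2^k}. f j\<bar> \<le> \<beta> k"
proof -
  assume h: "t0 \<le> c" "c + 2^k \<le> t1" "2^k dvd c"
  then obtain m where m: "c = m * 2^k" by (metis dvd_def mult.commute)
  have "\<bar>\<Sum>j\<in>{m*2^k..<(m+1)*2^k}. f j\<bar> \<le> \<beta> k" using h m by (intro blk) auto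
  then show ?thesis using m by (simp add: algebra_simps)
qed

lemma prefix: "2^K dvd c \<Longrightarrow> r < 2^K \<Longrightarrow> t0 \<le> c \<Longrightarrow> c + r \<le> t1 \<Longrightarrow> \<bar>\<Sum>j\<in>{c..<c+r}. f j\<bar> \<le> (\<Sum>k<K. \<beta> k)"
proof (induction K arbitrary: c r)
  case 0
  then show ?case by simp
next
  case (Suc K)
  have dK: "2^K dvd c" using Suc.prems(1) by (metis dvd_trans le_imp_power_dvd le_SucI order_refl)
  have mono: "(\<Sum>k<K. \<beta> k) \<le> (\<Sum>k<Suc K. \<beta> k)" using b0[of K] by simp
  show ?case
  proof (cases "r < 2^K")
    case True
    then show ?thesis using Suc.IH[OF dK True Suc.prems(3,4)] mono by linarith
  next
    case False
    have split: "(\<Sum>j\<in>{c..<c+r}. f j) = (\<Sum>j\<in>{c..<c+2^K}. f j) + (\<Sum>j\<in>{c+2^K..<c+2^K+(r-2^K)}. f j)"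
      using False by (subst sum.atLeastLessThan_concat[symmetric, of c "c+2^K"]) auto
    have a: "\<bar>\<Sum>j\<in>{c..<c+2^K}. f j\<bar> \<le> \<beta> K" using Suc.prems False dK by (intro blk') auto
    have b: "\<bar>\<Sum>j\<in>{c+2^K..<c+2^K+(r-2^K)}. f j\<bar> \<le> (\<Sum>k<K. \<beta> k)"
      using Suc.prems False dK by (intro Suc.IH) auto
    show ?thesis using split a b by simp
  qed
qed

lemma suffix: "2^K dvd c \<Longrightarrow> r < 2^K \<Longrightarrow> u + r = c \<Longrightarrow> t0 \<le> u \<Longrightarrow> c \<le> t1 \<Longrightarrow> \<bar>\<Sum>j\<in>{u..<c}. f j\<bar> \<le> (\<Sum>k<K. \<beta> k)"
proof (induction K arbitrary: c r u)
  case 0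
  then show ?case by simp
next
  case (Suc K)
  have dK: "2^K dvd c" using Suc.prems(1) by (metis dvd_trans le_imp_power_dvd le_SucI order_refl)
  have mono: "(\<Sum>k<K. \<beta> k) \<le> (\<Sum>k<Suc K. \<beta> k)" using b0[of K] by simp
  show ?case
  proof (cases "r < 2^K")
    case True
    then show ?thesis using Suc.IH[OF dK True Suc.prems(3,4,5)] mono by linarith
  next
    case False
    define c' where "c' = c - 2^K"
    have cc: "c = c' + 2^K" unfolding c'_def using False Suc.prems(3) by linarith
    have ur: "u \<le> c'" unfolding c'_def using False Suc.prems(3) by linarith
    have split: "(\<Sum>j\<in>{u..<c}. f j) = (\<Sum>j\<in>{u..<c'}. f j) + (\<Sum>j\<in>{c'..<c'+2^K}. f j)"
      unfolding cc using ur by (rule sum.atLeastLessThan_concat[symmetric]) simp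
    have d2: "2^K dvd c'" unfolding c'_def using dK by (simp add: dvd_diff_nat)
    have a: "\<bar>\<Sum>j\<in>{c'..<c'+2^K}. f j\<bar> \<le> \<beta> K"
      by (rule blk') (use Suc.prems cc ur d2 in linarith)+
    have b: "\<bar>\<Sum>j\<in>{u..<c'}. f j\<bar> \<le> (\<Sum>k<K. \<beta> k)"
    proof (rule Suc.IH[OF d2, of "r - 2^K"])
      show "r - 2^K < 2^K" using Suc.prems(2) False by simp
      show "u + (r - 2^K) = c'" using Suc.prems(3) cc False by linarith
      show "t0 \<le> u" using Suc.prems(4) .
      show "c' \<le> t1" using Suc.prems(5) cc by linarith
    qed
    show ?thesis using split a b by simp
  qed
qed

lemma prefix': "2^K dvd c \<Longrightarrow> r \<le> 2^K \<Longrightarrow> t0 \<le> c \<Longrightarrow> c + r \<le> t1 \<Longrightarrow> \<bar>\<Sum>j\<in>{c..<c+r}. f j\<bar> \<le> (\<Sum>k<Suc K. \<beta> k)"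
proof -
  assume h: "2^K dvd c" "r \<le> 2^K" "t0 \<le> c" "c + r \<le> t1"
  have s: "(\<Sum>k<K. \<beta> k) + \<beta> K = (\<Sum>k<Suc K. \<beta> k)" by simp
  have p: "(\<Sum>k<K. \<beta> k) \<ge> 0" using b0 by (simp add: sum_nonneg)
  show ?thesis
  proof (cases "r = 2^K")
    case True
    then show ?thesis using blk'[of c K] h s p by auto
  next
    case False
    then show ?thesis using prefix[of K c r] h s b0[of K] by simp
  qed
qed

lemma suffix': "2^K dvd c \<Longrightarrow> r \<le> 2^K \<Longrightarrow> u + r = c \<Longrightarrow> t0 \<le> u \<Longrightarrow> c \<le> t1 \<Longrightarrow> \<bar>\<Sum>j\<in>{u..<c}. f j\<bar> \<le> (\<Sum>k<Suc K. \<beta> k)"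
proof -
  assume h: "2^K dvd c" "r \<le> 2^K" "u + r = c" "t0 \<le> u" "c \<le> t1"
  have s: "(\<Sum>k<K. \<beta> k) + \<beta> K = (\<Sum>k<Suc K. \<beta> k)" by simp
  have p: "(\<Sum>k<K. \<beta> k) \<ge> 0" using b0 by (simp add: sum_nonneg)
  show ?thesis
  proof (cases "r = 2^K")
    case True
    have d2: "2^K dvd u" using h True by (metis dvd_add_left_iff dvd_refl)
    have "\<bar>\<Sum>j\<in>{u..<u+2^K}. f j\<bar> \<le> \<beta> K"
      by (rule blk') (use h True d2 in linarith)+
    then show ?thesis using True h s p by simp
  next
    case False
    then have "r < 2^K" using h(2) by simp
    then show ?thesis using suffix[of K c r u] h s b0[of K] by simp
  qed
qed

lemma main_dyad: "q*2^K \<le> u \<Longrightarrow> u \<le> v \<Longrightarrow> v \<le> (q+1)*2^K \<Longrightarrow> t0 \<le> u \<Longrightarrow> v \<le> t1 \<Longrightarrow>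
    \<bar>\<Sum>j\<in>{u..<v}. f j\<bar> \<le> \<beta> K + 2 * (\<Sum>k<K. \<beta> k)"
proof (induction K arbitrary: q u v)
  case 0
  show ?case
  proof (cases "u = v")
    case True then show ?thesis using b0[of 0] by simp
  next
    case False
    then have "u = q" "v = q + 1" using 0 by auto
    then show ?thesis using blk[of q 0] 0 by simp
  qed
next
  case (Suc K)
  let ?m = "(2*q+1)*2^K"
  have p: "(\<Sum>k<K. \<beta> k) \<ge> 0" using b0 by (simp add: sum_nonneg)
  have mono: "\<beta> K + 2 * (\<Sum>k<K. \<beta> k) \<le> \<beta> (Suc K) + 2 * (\<Sum>k<Suc K. \<beta> k)"
    using b0[of K] b0[of "Suc K"] by simp
  have q2: "q * 2^Suc K = (2*q) * 2^K" by simp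
  have q3: "(q+1) * 2^Suc K = (2*q+1+1) * 2^K" by simp
  show ?case
  proof (cases "v \<le> ?m")
    case True
    have "\<bar>\<Sum>j\<in>{u..<v}. f j\<bar> \<le> \<beta> K + 2 * (\<Sum>k<K. \<beta> k)"
      using Suc.prems True q2 by (intro Suc.IH[of "2*q"]) auto
    then show ?thesis using mono by linarith
  next
    case v: False
    show ?thesis
    proof (cases "?m \<le> u")
      case True
      have "\<bar>\<Sum>j\<in>{u..<v}. f j\<bar> \<le> \<beta> K + 2 * (\<Sum>k<K. \<beta> k)"
        using Suc.prems True q3 by (intro Suc.IH[of "2*q+1"]) auto
      then show ?thesis using mono by linarith
    next
      case False
      have um: "u \<le> ?m" "?m \<le> v" using False v by linarith+
      have vv: "v = ?m + (v - ?m)" using um by simp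
      have split: "(\<Sum>j\<in>{u..<v}. f j) = (\<Sum>j\<in>{u..<?m}. f j) + (\<Sum>j\<in>{?m..<?m+(v-?m)}. f j)"
        using um vv sum.atLeastLessThan_concat[OF um, of f] by simp
      have dm: "2^K dvd ?m" by simp
      have a: "\<bar>\<Sum>j\<in>{u..<?m}. f j\<bar> \<le> (\<Sum>k<Suc K. \<beta> k)"
      proof (rule suffix'[OF dm, of "?m - u"])
        show "?m - u \<le> 2^K" using Suc.prems(1) q2 by (simp add: algebra_simps)
        show "u + (?m - u) = ?m" using um by simp
        show "t0 \<le> u" using Suc.prems(4) .
        show "?m \<le> t1" using um Suc.prems(5) by linarith
      qed
      have b: "\<bar>\<Sum>j\<in>{?m..<?m+(v-?m)}. f j\<bar> \<le> (\<Sum>k<Suc K. \<beta> k)"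
      proof (rule prefix'[OF dm])
        show "v - ?m \<le> 2^K" using Suc.prems(3) q3 by (simp add: algebra_simps)
        show "t0 \<le> ?m" using um Suc.prems(4) by linarith
        show "?m + (v - ?m) \<le> t1" using um Suc.prems(5) by simp
      qed
      show ?thesis using split a b b0[of "Suc K"] by simp
    qed
  qed
qed

lemma dyadic: "t0 \<le> t1 \<Longrightarrow> t1 \<le> 2^K \<Longrightarrow> \<bar>\<Sum>j\<in>{t0..<t1}. f j\<bar> \<le> \<beta> K + 2 * (\<Sum>k<K. \<beta> k)"
  using main_dyad[of 0 K t0 t1] by simp

end


lemma ball_card:
  assumes X: "finite X" and w0: "\<omega>0 \<in> Om X"
  shows "card {\<omega>\<in>Om X. card {x\<in>X. \<omega> x \<noteq> \<omega>0 x} \<le> m} \<le> (\<Sum>k\<le>m. card X choose k)"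
proof -
  define B where "B = {\<omega>\<in>Om X. card {x\<in>X. \<omega> x \<noteq> \<omega>0 x} \<le> m}"
  define D where "D \<omega> = {x\<in>X. \<omega> x \<noteq> \<omega>0 x}" for \<omega> :: "'a \<Rightarrow> int"
  have inj: "inj_on D B"
  proof (rule inj_onI)
    fix \<omega> \<omega>' assume w: "\<omega> \<in> B" "\<omega>' \<in> B" and e: "D \<omega> = D \<omega>'"
    have wO: "\<omega> \<in> Om X" "\<omega>' \<in> Om X" using w unfolding B_def by auto
    show "\<omega> = \<omega>'"
    proof
      fix x
      show "\<omega> x = \<omega>' x"
      proof (cases "x \<in> X")
        case False
        then show ?thesis using wO unfolding Om_def by (simp add: PiE_def extensional_def)
      next
        case True
        have v: "\<omega> x = -1 \<or> \<omega> x = 1" "\<omega>' x = -1 \<or> \<omega>' x = 1" "\<omega>0 x = -1 \<or> \<omega>0 x = 1"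
          using Om_val[OF wO(1) True] Om_val[OF wO(2) True] Om_val[OF w0 True] by auto
        have "(\<omega> x \<noteq> \<omega>0 x) = (\<omega>' x \<noteq> \<omega>0 x)" using e True unfolding D_def by blast
        then show ?thesis using v by auto
      qed
    qed
  qed
  have sub: "D ` B \<subseteq> (\<Union>k\<in>{..m}. {S. S \<subseteq> X \<and> card S = k})"
    unfolding B_def D_def by auto
  have "card B = card (D ` B)" using inj by (simp add: card_image)
  also have "\<dots> \<le> card (\<Union>k\<in>{..m}. {S. S \<subseteq> X \<and> card S = k})"
    by (rule card_mono[OF _ sub]) (use X in auto)
  also have "\<dots> \<le> (\<Sum>k\<le>m. card {S. S \<subseteq> X \<and> card S = k})" by (rule card_UN_le) simp
  also have "\<dots> = (\<Sum>k\<le>m. card X choose k)" using n_subsets[OF X] by simp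
  finally show ?thesis unfolding B_def .
qed

lemma binom_tail: "real (\<Sum>k\<le>m. n choose k) \<le> 9^m * (10/9)^n"
proof -
  define g where "g k = real (n choose k) * (1/9)^k" for k
  have g0: "g k \<ge> 0" for k unfolding g_def by simp
  have "real (\<Sum>k\<le>m. n choose k) = (\<Sum>k\<le>m. g k * 9^k)"
    unfolding g_def by (simp add: power_one_over field_simps)
  also have "\<dots> \<le> (\<Sum>k\<le>m. g k * 9^m)"
    by (rule sum_mono) (use g0 in \<open>auto intro!: mult_left_mono power_increasing\<close>)
  also have "\<dots> = 9^m * (\<Sum>k\<le>m. g k)" by (simp add: sum_distrib_right[symmetric] mult.commute)
  also have "(\<Sum>k\<le>m. g k) \<le> (\<Sum>k\<le>m+n. g k)" by (rule sum_mono2) (use g0 in auto)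
  also have "(\<Sum>k\<le>m+n. g k) = (\<Sum>k\<le>n. g k)"
    by (rule sum.mono_neutral_right) (auto simp: g_def binomial_eq_0)
  also have "\<dots> = (1/9 + 1)^n" unfolding g_def by (subst binomial_ring) simp
  also have "(1/9 + 1 :: real) = 10/9" by simp
  finally show ?thesis by simp
qed

lemma numeric_contra:
  fixes n m :: nat
  assumes n: "n \<ge> 1" and m: "10 * m \<le> n"
  shows "9^m * (10/9)^n < 2^n * exp (- real n / 4)"
proof -
  define P where "P = (9::real)^m * (10/9)^n"
  define Q where "Q = (2::real)^n * exp (- real n / 4)"
  have P0: "P \<ge> 0" unfolding P_def by simp
  have Q0: "Q \<ge> 0" unfolding Q_def by simp
  have "P^10 = (9^m)^10 * ((10/9)^n)^10" unfolding P_def by (simp only: power_mult_distrib)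
  also have "(9^m)^10 = (9::real)^(10*m)" by (simp only: power_mult[symmetric] mult.commute)
  also have "((10/9)^n)^10 = ((10/9::real)^10)^n" by (simp only: power_mult[symmetric] mult.commute)
  also have "(9::real)^(10*m) * ((10/9)^10)^n \<le> 9^n * ((10/9)^10)^n"
  proof (rule mult_right_mono)
    show "(9::real)^(10*m) \<le> 9^n" by (rule power_increasing) (use m in auto)
  qed simp
  also have "\<dots> = (9 * (10/9)^10)^n" by (simp only: power_mult_distrib)
  finally have P10: "P^10 \<le> (9 * (10/9)^10)^n" .
  have e: "exp (- real n / 4) ^ 10 = exp (- 5/2) ^ n"
    by (simp add: exp_of_nat_mult[symmetric] field_simps)
  have Q10: "Q^10 = (1024 * exp (- 5/2))^n"
  proof -
    have "Q^10 = ((2::real)^n)^10 * exp (- real n / 4) ^ 10" unfolding Q_def by (simp only: power_mult_distrib)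
    also have "((2::real)^n)^10 = (2^10)^n" by (simp only: power_mult[symmetric] mult.commute)
    also have "exp (- real n / 4) ^ 10 = exp (- 5/2) ^ n" by (rule e)
    also have "(2::real)^10 = 1024" by simp
    finally show ?thesis by (simp only: power_mult_distrib)
  qed
  have e52: "exp (5/2::real) \<le> 27"
  proof -
    have "exp (5/2::real) \<le> exp 3" by simp
    also have "exp (3::real) = exp 1 ^ 3" by (simp add: exp_of_nat_mult[symmetric])
    also have "\<dots> \<le> 3^3" by (intro power_mono exp_le) auto
    finally show ?thesis by simp
  qed
  have c: "9 * (10/9)^10 < 1024 * exp (- 5/2::real)"
  proof -
    have "9 * (10/9)^10 * exp (5/2::real) \<le> 9 * (10/9)^10 * 27"
      using e52 by (intro mult_left_mono) auto
    also have "\<dots> < 1024" by (simp add: power_divide)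
    finally have lt: "9 * (10/9)^10 * exp (5/2::real) < 1024" .
    have E: "exp (5/2::real) > 0" by simp
    have A: "9 * (10/9)^10 < 1024 / exp (5/2::real)"
      using lt E by (simp only: pos_less_divide_eq[OF E])
    have B: "exp (- 5/2::real) = 1 / exp (5/2)"
      using exp_minus[of "5/2::real"] by (simp add: inverse_eq_divide)
    show ?thesis unfolding B using A by simp
  qed
  have "(9 * (10/9)^10)^n < (1024 * exp (- 5/2::real))^n"
    using c n by (intro power_strict_mono) auto
  then have "P^10 < Q^10" using P10 Q10 by simp
  then have "P < Q" using Q0 by (rule power_less_imp_less_base)
  then show ?thesis unfolding P_def Q_def .
qed


lemma bernoulli_nat: "(1::real) + real t * x \<le> (1 + x)^t" if "x \<ge> 0" for x :: real
proof (induction t)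
  case 0 then show ?case by simp
next
  case (Suc t)
  have "1 + real (Suc t) * x \<le> (1 + real t * x) * (1 + x)"
    using that by (simp add: algebra_simps)
  also have "\<dots> \<le> (1 + x)^t * (1 + x)" using Suc that by (intro mult_right_mono) auto
  finally show ?case by (simp add: mult.commute)
qed

lemma A1:
  fixes t d :: nat assumes d: "d \<ge> 1"
  shows "(1/64) * (1/2)^(t*d) * (64/49)^t \<le> (1/20) * ((2/3)::real)^t"
proof -
  have "(1/2::real)^(t*d) \<le> (1/2)^t" using d by (intro power_decreasing) auto
  then have "(1/64) * (1/2::real)^(t*d) * (64/49)^t \<le> (1/64) * (1/2)^t * (64/49)^t"
    by (intro mult_right_mono) auto
  also have "\<dots> = (1/64) * (32/49)^t" by (simp add: power_mult_distrib[symmetric])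
  also have "\<dots> \<le> (1/64) * (2/3)^t" by (intro mult_left_mono power_mono) auto
  also have "\<dots> \<le> (1/20) * (2/3)^t" by (intro mult_right_mono) auto
  finally show ?thesis .
qed

lemma A2:
  fixes t d :: nat
  shows "(1/64) * exp (-1600*(real d+1)*(49/32)^t) * 2^(t*d) * (64/49)^t \<le> (1/20) * ((2/3)::real)^t"
proof -
  have b: "1 + real t * (1/2) \<le> ((3/2)::real)^t" using bernoulli_nat[of "1/2" t] by simp
  have "((3/2)::real)^t \<le> (49/32)^t" by (intro power_mono) auto
  then have b2: "1 + real t / 2 \<le> ((49/32)::real)^t" using b by simp
  have e4: "(4::real) \<le> exp 2"
  proof -
    have "(2::real) \<le> exp 1" using exp_ge_add_one_self[of 1] by simp
    then have "(2::real)^2 \<le> exp 1 ^ 2" by (intro power_mono) auto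
    also have "exp (1::real) ^ 2 = exp 2" by (simp add: exp_of_nat_mult[symmetric])
    finally show ?thesis by simp
  qed
  have "(2::real)^(t*d) * (64/49)^t * (3/2)^t \<le> 4^(t*d) * 4^t"
  proof -
    have "(2::real)^(t*d) \<le> 4^(t*d)" by (intro power_mono) auto
    moreover have "((64/49)::real)^t * (3/2)^t \<le> 4^t"
      by (simp add: power_mult_distrib[symmetric]) (intro power_mono, auto)
    ultimately show ?thesis by (simp add: mult.assoc mult_mono)
  qed
  also have "\<dots> = 4^(t*(d+1))" by (simp add: power_add algebra_simps)
  also have "\<dots> \<le> exp 2 ^ (t*(d+1))" using e4 by (intro power_mono) auto
  also have "\<dots> = exp (2 * real (t*(d+1)))" by (simp add: exp_of_nat_mult[symmetric] mult.commute)
  finally have p: "(2::real)^(t*d) * (64/49)^t * (3/2)^t \<le> exp (2 * real (t*(d+1)))" .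
  have ex: "exp (-1600*(real d+1)*(49/32)^t) \<le> exp (- 2 * real (t*(d+1)))"
  proof -
    have "2 * real (t*(d+1)) \<le> 1600*(real d+1)*(real t/2)" by (simp add: algebra_simps)
    also have "\<dots> \<le> 1600*(real d+1)*(49/32)^t" using b2 by (intro mult_left_mono) auto
    finally have h: "2 * real (t*(d+1)) \<le> 1600*((real d+1)*(49/32)^t)" by (simp only: mult.assoc)
    have "-1600*(real d+1)*(49/32)^t = - (1600*((real d+1)*(49/32)^t))" by (simp only: mult_minus_left mult.assoc)
    also have "\<dots> \<le> - 2 * real (t*(d+1))" using h by linarith
    finally show ?thesis by (simp only: exp_le_cancel_iff)
  qed
  have "exp (-1600*(real d+1)*(49/32)^t) * ((2::real)^(t*d) * (64/49)^t * (3/2)^t)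
      \<le> exp (- 2 * real (t*(d+1))) * exp (2 * real (t*(d+1)))"
    using ex p by (intro mult_mono) auto
  also have "\<dots> = 1" by (simp flip: exp_add)
  finally have q: "exp (-1600*(real d+1)*(49/32)^t) * ((2::real)^(t*d) * (64/49)^t * (3/2)^t) \<le> 1" .
  have pos: "((2/3)::real)^t > 0" by simp
  have "(1/64) * exp (-1600*(real d+1)*(49/32)^t) * 2^(t*d) * (64/49)^t
      = (1/64) * (exp (-1600*(real d+1)*(49/32)^t) * ((2::real)^(t*d) * (64/49)^t * (3/2)^t)) * (2/3)^t"
    by (simp add: power_mult_distrib[symmetric])
  also have "\<dots> \<le> (1/64) * 1 * (2/3)^t" using q pos by (intro mult_right_mono mult_left_mono) auto
  also have "\<dots> \<le> (1/20) * (2/3)^t" using pos by simp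
  finally show ?thesis .
qed

lemma level_budget:
  fixes d K0 k N :: nat
  assumes d: "d \<ge> 1" and KK: "real ((5*N)^d) \<le> 2^(K0*(d+1))"
  defines "L0 \<equiv> (2::real)^K0" and "t \<equiv> nat \<bar>int k - int K0\<bar>"
  defines "D \<equiv> 80 * sqrt (real d+1) * sqrt L0 * (7/8)^t"
  shows "100 * exp (-(D^2)/(4*2^k)) / D^2 * (5*real N/2^k)^d \<le> (1/20) * (2/3)^t"
proof -
  have L0pos: "L0 > 0" unfolding L0_def by simp
  have D2: "D^2 = 6400*(real d+1)*L0*(49/64)^t"
  proof -
    have a: "((7/8::real)^t)^2 = ((7/8)^2)^t" by (metis power_mult mult.commute)
    have b: "((7/8::real)^2) = 49/64" by (simp add: power2_eq_square)
    have c: "(sqrt (real d+1))^2 = real d + 1" by simp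
    have e: "(sqrt L0)^2 = L0" using L0pos by simp
    show ?thesis unfolding D_def power_mult_distrib a b c e by simp
  qed
  have D2pos: "D^2 > 0" unfolding D2 using L0pos by simp
  define E where "E = exp (-(D^2)/(4*2^k))"
  have E0: "E > 0" unfolding E_def by simp
  define G where "G = (2::real)^(K0*(d+1)) / 2^(k*d) / L0"
  have R: "(5*real N/2^k)^d \<le> 2^(K0*(d+1)) / 2^(k*d)"
  proof -
    have "(5*real N/2^k)^d = real ((5*N)^d) / 2^(k*d)" by (simp add: power_divide power_mult[symmetric] mult.commute)
    also have "\<dots> \<le> 2^(K0*(d+1)) / 2^(k*d)" using KK by (intro divide_right_mono) auto
    finally show ?thesis .
  qed
  have "100 * E / D^2 * (5*real N/2^k)^d \<le> 100 * E / D^2 * (2^(K0*(d+1)) / 2^(k*d))"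
    using R E0 D2pos by (intro mult_left_mono) auto
  also have "\<dots> = (1/64) * E * G * (64/49)^t / (real d+1)"
  proof -
    have q: "((64/49)::real)^t = 1 / (49/64)^t" by (simp add: power_divide)
    have aux: "100 * E / (6400*c*L0*q) * A = (1/64)*E*(A/L0)*(1/q)/c"
      if "q > 0" "L0 > 0" "c > 0" for q c A :: real using that by (simp add: field_simps)
    show ?thesis unfolding D2 G_def q using aux[of "(49/64)^t" "real d + 1" "2^(K0*(d+1)) / 2^(k*d)"] L0pos
      by simp
  qed
  also have "\<dots> \<le> (1/64) * E * G * (64/49)^t"
  proof -
    have "0 \<le> (1/64) * E * G * (64/49)^t" unfolding G_def using E0 L0pos by simp
    then have "(1/64) * E * G * (64/49)^t / (real d+1) \<le> (1/64) * E * G * (64/49)^t / 1"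
      by (intro divide_left_mono) auto
    then show ?thesis by simp
  qed
  also have "\<dots> \<le> (1/20) * (2/3)^t"
  proof (cases "K0 \<le> k")
    case True
    then have kk: "k = K0 + t" unfolding t_def by simp
    have G1: "G = (1/2)^(t*d)"
      unfolding G_def L0_def kk by (simp add: power_add power_mult_distrib algebra_simps power_one_over)
    have "E \<le> 1" unfolding E_def using D2pos by simp
    then have "(1/64) * E * G * (64/49)^t \<le> (1/64) * 1 * (1/2)^(t*d) * (64/49)^t"
      unfolding G1 by (intro mult_right_mono) auto
    also have "\<dots> \<le> (1/20) * (2/3)^t" using A1[OF d, of t] by simp
    finally show ?thesis .
  next
    case False
    then have kk: "K0 = k + t" unfolding t_def by simp
    have G1: "G = 2^(t*d)"
      unfolding G_def L0_def kk by (simp add: power_add power_mult_distrib algebra_simps)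
    have "D^2 / (4*2^k) = 1600*(real d+1)*(49/32)^t"
    proof -
      have "D^2 / (4*2^k) = 1600*(real d+1)*((49/64)^t * 2^t)"
        unfolding D2 L0_def kk by (simp add: power_add field_simps)
      also have "(49/64::real)^t * 2^t = (49/32)^t" by (simp add: power_mult_distrib[symmetric])
      finally show ?thesis .
    qed
    then have "-(D^2)/(4*2^k) = -1600*(real d+1)*(49/32)^t" by (simp only: minus_divide_left mult_minus_left)
    then have E1: "E = exp (-1600*(real d+1)*(49/32)^t)" unfolding E_def by simp
    show ?thesis unfolding E1 G1 using A2[of d t] by simp
  qed
  finally show ?thesis unfolding E_def by simp
qed


lemma level_sum:
  fixes r :: real and F :: "nat set"
  assumes r: "0 < r" "r < 1" and F: "finite F"
  shows "(\<Sum>k\<in>F. r ^ nat \<bar>int k - int K0\<bar>) \<le> (1+r)/(1-r)"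
proof -
  have inj: "inj_on (\<lambda>k. int k - int K0) F" by (auto simp: inj_on_def)
  have "(\<Sum>k\<in>F. r ^ nat \<bar>int k - int K0\<bar>) = (\<Sum>j\<in>(\<lambda>k. int k - int K0) ` F. r ^ nat \<bar>j\<bar>)"
    by (simp add: sum.reindex[OF inj])
  also have "\<dots> \<le> (1+r)/(1-r)" by (rule geom_int_sum[OF r]) (use F in simp)
  finally show ?thesis .
qed

definition Bk :: "nat \<Rightarrow> nat \<Rightarrow> nat \<Rightarrow> int list set" where
  "Bk d N k = {b. length b = d \<and> b \<noteq> replicate d 0 \<and> (\<forall>c<d. (2^k - 1) * \<bar>b!c\<bar> \<le> int N - 1)}"

lemma aux_np: "(n - 1) * p \<le> 2 * n * (p - 1)" if "p \<ge> 2" "n \<ge> 1" for n p :: real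
proof -
  have a: "n * 2 \<le> n * p" using that by (intro mult_left_mono) auto
  have b: "(n - 1) * p = n * p - p" by (simp add: algebra_simps)
  have c: "2 * n * (p - 1) = 2 * (n * p) - 2 * n" by (simp add: algebra_simps)
  show ?thesis unfolding b c using a that by linarith
qed

lemma Bk_card:
  assumes k: "k \<ge> 1" and N: "N \<ge> 1"
  shows "finite (Bk d N k) \<and> real (card (Bk d N k)) \<le> (5 * real N / 2^k)^d"
proof -
  define M where "M = (int N - 1) div (2^k - 1)"
  have den: "(2::int)^k - 1 > 0"
  proof -
    have "(2::int)^1 \<le> 2^k" using k by (intro power_increasing) auto
    then show ?thesis by simp
  qed
  have sub: "Bk d N k \<subseteq> {xs. set xs \<subseteq> {-M..M} \<and> length xs = d}"
  proof
    fix b assume b: "b \<in> Bk d N k"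
    have "\<bar>b!c\<bar> \<le> M" if c: "c < d" for c
    proof -
      have h: "(2^k - 1) * \<bar>b!c\<bar> \<le> int N - 1" using b c unfolding Bk_def by auto
      have "\<bar>b!c\<bar> = ((2^k - 1) * \<bar>b!c\<bar>) div (2^k - 1)"
        by (rule nonzero_mult_div_cancel_left[symmetric]) (use den in linarith)
      also have "\<dots> \<le> (int N - 1) div (2^k - 1)" using h den by (intro zdiv_mono1) auto
      finally show ?thesis unfolding M_def .
    qed
    note bb = this
    have lb: "length b = d" using b unfolding Bk_def by simp
    have "set b \<subseteq> {-M..M}"
    proof
      fix y assume "y \<in> set b"
      then obtain i where i: "i < length b" "b!i = y" by (metis in_set_conv_nth)
      then have "\<bar>y\<bar> \<le> M" using bb[of i] lb by simp
      then show "y \<in> {-M..M}" by (simp add: abs_le_iff)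
    qed
    then show "b \<in> {xs. set xs \<subseteq> {-M..M} \<and> length xs = d}" using lb by simp
  qed
  have fin: "finite (Bk d N k)" by (rule finite_subset[OF sub]) (simp add: finite_lists_length_eq)
  have "card (Bk d N k) \<le> card {xs. set xs \<subseteq> {-M..M} \<and> length xs = d}"
    by (rule card_mono[OF _ sub]) (simp add: finite_lists_length_eq)
  also have "\<dots> = (nat (2*M+1))^d" by (simp add: card_lists_length_eq)
  finally have c1: "real (card (Bk d N k)) \<le> real (nat (2*M+1)) ^ d"
    by (metis of_nat_le_iff of_nat_power)
  show ?thesis
  proof (cases "Bk d N k = {}")
    case True
    then show ?thesis by simp
  next
    case False
    then obtain b where b: "b \<in> Bk d N k" by blast
    then have "b \<noteq> replicate (length b) 0" "length b = d" unfolding Bk_def by auto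
    then obtain c where c: "c < d" "b!c \<noteq> 0" using nonzero_coord by metis
    have h: "(2^k - 1) * \<bar>b!c\<bar> \<le> int N - 1" using b c unfolding Bk_def by auto
    have "(2::int)^k - 1 \<le> (2^k - 1) * \<bar>b!c\<bar>" using c den by simp
    then have kN: "(2::int)^k \<le> int N" using h by linarith
    then have "real_of_int ((2::int)^k) \<le> real_of_int (int N)" by (simp only: of_int_le_iff)
    then have kNr: "(2::real)^k \<le> real N" by simp
    have M0: "M \<ge> 0" unfolding M_def using N den by (simp add: pos_imp_zdiv_nonneg_iff)
    have k2: "(2::real) \<le> 2^k"
    proof -
      have "(2::real)^1 \<le> 2^k" by (rule power_increasing) (use k in auto)
      then show ?thesis by simp
    qed
    have den_r: "(2::real)^k - 1 > 0" using k2 by simp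
    have "real_of_int M \<le> real_of_int (int N - 1) / real_of_int (2^k - 1)" unfolding M_def by (rule real_of_int_div4)
    also have "\<dots> = (real N - 1) / (2^k - 1)" by simp
    also have "\<dots> \<le> 2 * real N / 2^k"
    proof -
      have "(real N - 1) * 2^k \<le> 2 * real N * (2^k - 1)"
        by (rule aux_np) (use k2 N in auto)
      then have "(real N - 1) * 2^k / ((2^k - 1) * 2^k) \<le> 2 * real N * (2^k - 1) / ((2^k - 1) * 2^k)"
        using den_r k2 by (intro divide_right_mono) auto
      moreover have "(real N - 1) * 2^k / ((2^k - 1) * 2^k) = (real N - 1) / (2^k - 1)" using k2 by simp
      moreover have "2 * real N * (2^k - 1) / ((2^k - 1) * 2^k) = 2 * real N / 2^k" using den_r by simp
      ultimately show ?thesis by simp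
    qed
    finally have Mr: "real_of_int M \<le> 2 * real N / 2^k" .
    have "real (nat (2*M+1)) = 2 * real_of_int M + 1" using M0 by simp
    also have "\<dots> \<le> 4 * real N / 2^k + 1" using Mr by simp
    also have "\<dots> \<le> 5 * real N / 2^k"
    proof -
      have "1 \<le> real N / 2^k" using kNr by simp
      then show ?thesis by (simp add: field_simps)
    qed
    finally have "real (nat (2*M+1)) \<le> 5 * real N / 2^k" .
    then have "real (nat (2*M+1)) ^ d \<le> (5 * real N / 2^k)^d" by (intro power_mono) auto
    with c1 have "real (card (Bk d N k)) \<le> (5 * real N / 2^k)^d" by (rule order_trans)
    with fin show ?thesis by blast
  qed
qed

lemma K0_exists:
  fixes d N :: nat
  shows "\<exists>K0. (5*N)^d \<le> 2^(K0*(d+1)) \<and> (K0 = 0 \<or> 2^((K0-1)*(d+1)) < (5*N)^d)"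
proof -
  let ?P = "\<lambda>k. (5*N)^d \<le> (2::nat)^(k*(d+1))"
  have ex: "?P (5*N)"
  proof -
    have "(5*N)^d \<le> (2^(5*N))^d" by (intro power_mono) (simp_all add: less_imp_le)
    also have "\<dots> = 2^(5*N*d)" by (simp add: power_mult)
    also have "\<dots> \<le> 2^(5*N*(d+1))" by (intro power_increasing) auto
    finally show ?thesis .
  qed
  define K0 where "K0 = (LEAST k. ?P k)"
  have a: "?P K0" unfolding K0_def by (rule LeastI[where P="?P", OF ex])
  have b: "K0 = 0 \<or> 2^((K0-1)*(d+1)) < (5*N)^d"
  proof (cases "K0 = 0")
    case False
    then have "K0 - 1 < K0" by simp
    then have "\<not> ?P (K0 - 1)" unfolding K0_def by (rule not_less_Least)
    then show ?thesis by simp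
  qed simp
  show ?thesis using a b by blast
qed

lemma L0_bound:
  fixes d N K0 :: nat
  assumes N: "N \<ge> 1" and K: "K0 = 0 \<or> 2^((K0-1)*(d+1)) < (5*N)^d"
  shows "sqrt ((2::real)^K0) \<le> sqrt 10 * real N powr (real d / (2 * real d + 2))"
proof -
  have L: "((2::real)^K0)^(d+1) \<le> 10^(d+1) * real N ^ d"
  proof (cases "K0 = 0")
    case True
    have "(1::real) \<le> 10^(d+1)" by (rule one_le_power) simp
    moreover have "(1::real) \<le> real N ^ d" using N by simp
    ultimately have "1 * 1 \<le> (10::real)^(d+1) * real N ^ d" by (intro mult_mono) auto
    then show ?thesis using True by simp
  next
    case False
    then have K': "2^((K0-1)*(d+1)) < (5*N)^d" using K by simp
    obtain K1 where K1: "K0 = Suc K1" using False by (cases K0) auto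
    have "((2::real)^K0)^(d+1) = 2^(K0*(d+1))" by (simp only: power_mult)
    also have "K0*(d+1) = (d+1) + K1*(d+1)" unfolding K1 by simp
    also have "(2::real)^((d+1) + K1*(d+1)) = 2^(d+1) * 2^(K1*(d+1))" by (simp only: power_add)
    finally have e1: "((2::real)^K0)^(d+1) = 2^(d+1) * 2^(K1*(d+1))" .
    have "(2::nat)^(K1*(d+1)) \<le> (5*N)^d" using K' unfolding K1 by simp
    then have "(2::real)^(K1*(d+1)) \<le> real ((5*N)^d)"
      by (metis of_nat_le_iff of_nat_numeral of_nat_power)
    then have "2^(d+1) * (2::real)^(K1*(d+1)) \<le> 2^(d+1) * real ((5*N)^d)" by simp
    also have "2^(d+1) * real ((5*N)^d) = 2 * 10^d * real N ^ d"
    proof -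
      have "(10::real)^d = 2^d * 5^d" by (simp add: power_mult_distrib[symmetric])
      then show ?thesis by (simp add: power_mult_distrib)
    qed
    also have "\<dots> \<le> 10 * 10^d * real N ^ d" by simp
    finally show ?thesis using e1 by simp
  qed
  have Npos: "real N > 0" using N by simp
  define x where "x = (2::real)^K0"
  have x0: "x > 0" unfolding x_def by simp
  have dd: "real (d+1) > 0" by simp
  have "x = (x^(d+1)) powr (1/real (d+1))"
  proof -
    have "(x^(d+1)) powr (1/real (d+1)) = (x powr real (d+1)) powr (1/real (d+1))" by (simp only: powr_realpow[OF x0])
    also have "\<dots> = x powr (real (d+1) * (1/real (d+1)))" by (rule powr_powr)
    also have "\<dots> = x" using dd x0 by simp
    finally show ?thesis by simp
  qed
  also have "\<dots> \<le> (10^(d+1) * real N ^ d) powr (1/real (d+1))"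
    using L unfolding x_def by (intro powr_mono2) auto
  also have "\<dots> = 10 * real N powr (real d / real (d+1))"
  proof -
    have "(10^(d+1) * real N ^ d) powr (1/real (d+1)) = ((10::real)^(d+1)) powr (1/real (d+1)) * (real N ^ d) powr (1/real (d+1))"
      by (rule powr_mult)
    also have "((10::real)^(d+1)) powr (1/real (d+1)) = 10"
    proof -
      have "((10::real)^(d+1)) powr (1/real (d+1)) = ((10::real) powr real (d+1)) powr (1/real (d+1))" by (simp only: powr_realpow[of "10::real"] zero_less_numeral)
      also have "\<dots> = 10 powr (real (d+1) * (1/real (d+1)))" by (rule powr_powr)
      also have "\<dots> = 10" using dd by simp
      finally show ?thesis .
    qed
    also have "(real N ^ d) powr (1/real (d+1)) = real N powr (real d / real (d+1))"
    proof (cases "d = 0")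
      case True then show ?thesis using Npos by simp
    next
      case False
      have "(real N ^ d) powr (1/real (d+1)) = (real N powr real d) powr (1/real (d+1))" by (simp only: powr_realpow[OF Npos])
      also have "\<dots> = real N powr (real d * (1/real (d+1)))" by (rule powr_powr)
      finally show ?thesis by simp
    qed
    finally show ?thesis .
  qed
  finally have L0: "(2::real)^K0 \<le> 10 * real N powr (real d / real (d+1))" unfolding x_def .
  have "sqrt ((2::real)^K0) \<le> sqrt (10 * real N powr (real d / real (d+1)))" using L0 by simp
  also have "\<dots> = sqrt 10 * sqrt (real N powr (real d / real (d+1)))" by (simp add: real_sqrt_mult)
  also have "sqrt (real N powr (real d / real (d+1))) = real N powr (real d / (2 * real d + 2))"
  proof -
    have "sqrt (real N powr (real d / real (d+1))) = real N powr ((real d / real (d+1))/2)"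
      using powr_half_sqrt_powr[of "real N" "real d / real (d+1)"] by simp
    also have "(real d / real (d+1))/2 = real d / (2 * real d + 2)" by (simp add: field_simps)
    finally show ?thesis .
  qed
  finally show ?thesis .
qed

lemma final_numeric:
  fixes d N :: nat and s :: real
  assumes N: "N \<ge> 1" and s: "s \<le> sqrt 10 * real N powr (real d / (2 * real d + 2))"
  shows "2 + 2400 * sqrt (real d + 1) * s \<le> (500 * real d + 10^6) * real N powr (real d / (2 * real d + 2))"
proof -
  let ?p = "real N powr (real d / (2 * real d + 2))"
  have p1: "?p \<ge> 1" using N by (intro ge_one_powr_ge_zero) auto
  define z where "z = sqrt (real d + 1)"
  have z0: "z \<ge> 0" unfolding z_def by simp
  have zz: "z^2 = real d + 1" unfolding z_def by simp
  have s10: "sqrt 10 \<le> (4::real)" by (rule real_le_lsqrt) auto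
  have "2400 * z * s \<le> 2400 * z * (4 * ?p)"
  proof -
    have "s \<le> 4 * ?p" using mult_right_mono[OF s10, of ?p] p1 s by linarith
    then show ?thesis using z0 by (intro mult_left_mono) auto
  qed
  moreover have "2400 * z * (4 * ?p) = 9600 * z * ?p" by simp
  ultimately have a: "2 + 2400 * z * s \<le> 2 * ?p + 9600 * z * ?p" using p1 by linarith
  have "9600 * z \<le> 500 * z^2 + 46080"
  proof -
    have "0 \<le> 500 * (z - 48/5)^2" by simp
    also have "500 * (z - 48/5)^2 = 500 * z^2 - 9600 * z + 46080" by (simp add: power2_eq_square algebra_simps)
    finally show ?thesis by simp
  qed
  then have "2 + 9600 * z \<le> 500 * real d + 10^6" using zz by simp
  then have "(2 + 9600 * z) * ?p \<le> (500 * real d + 10^6) * ?p" using p1 by (intro mult_right_mono) auto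
  then show ?thesis using a unfolding z_def by (simp add: algebra_simps)
qed


lemma finite_grid: "finite (grid d N)"
proof -
  have "grid d N \<subseteq> {xs. set xs \<subseteq> {1..int N} \<and> length xs = d}"
    unfolding grid_def by (auto simp: in_set_conv_nth)
  then show ?thesis by (rule finite_subset) (simp add: finite_lists_length_eq)
qed

lemma floor_close:
  fixes u v dl :: real
  assumes D: "dl > 0" and e: "\<lfloor>(u + dl)/(2*dl)\<rfloor> = \<lfloor>(v + dl)/(2*dl)\<rfloor>"
  shows "\<bar>u - v\<bar> < 2*dl"
proof -
  let ?a = "(u + dl)/(2*dl)" and ?b = "(v + dl)/(2*dl)"
  have "\<bar>?a - ?b\<bar> < 1" using e by linarith
  moreover have "?a - ?b = (u - v)/(2*dl)" using D by (simp add: field_simps)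
  ultimately have "\<bar>u - v\<bar>/(2*dl) < 1" using D by simp
  then show ?thesis using D by (simp add: field_simps)
qed

lemma sum_progression:
  assumes "length a = length b" "b \<noteq> replicate (length b) 0"
  shows "(\<Sum>x\<in>progression a b l. g x) = (\<Sum>i<l. g (pt a b (int i)))"
proof -
  have inj: "inj_on (\<lambda>i. pt a b (int i)) {..<l}"
  proof (rule inj_onI)
    fix x y assume "x \<in> {..<l}" "y \<in> {..<l}" "pt a b (int x) = pt a b (int y)"
    then have "int x = int y" using pt_inj[OF assms] by blast
    then show "x = y" by simp
  qed
  show ?thesis unfolding progression_eq by (rule sum.reindex[OF inj, unfolded comp_def])
qed

lemma grid_coord:
  assumes "x \<in> grid d N" "c < d"
  shows "1 \<le> x!c \<and> x!c \<le> int N"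
  using assms unfolding grid_def by auto


lemma main_case:
  fixes d N :: nat and X :: "int list set"
  assumes N: "N \<ge> 1" and Xg: "X \<subseteq> grid d N" and d: "d \<ge> 1" and Xne: "X \<noteq> {}"
  shows "\<exists>\<chi> :: int list \<Rightarrow> int.
           (\<forall>x\<in>X. \<chi> x \<in> {-1, 0, 1}) \<and>
           real (card {x\<in>X. \<chi> x \<noteq> 0}) \<ge> real (card X) / 10 \<and>
           (\<forall>A0\<in>APs d N. real_of_int \<bar>chi_sum \<chi> (A0 \<inter> X)\<bar>
              \<le> (500 * real d + 10^6) * real N powr (real d / (2 * real d + 2)))"
proof -
  have finX: "finite X" using Xg finite_grid finite_subset by blast
  define n where "n = card X"
  have n1: "n \<ge> 1" using finX Xne unfolding n_def by (simp add: Suc_le_eq card_gt_0_iff)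
  obtain K0 where K0a: "(5*N)^d \<le> 2^(K0*(d+1))" and K0b: "K0 = 0 \<or> 2^((K0-1)*(d+1)) < (5*N)^d"
    using K0_exists by blast
  have KK: "real ((5*N)^d) \<le> 2^(K0*(d+1))"
  proof -
    have "real ((5*N)^d) \<le> real (2^(K0*(d+1)))" using K0a by (simp only: of_nat_le_iff)
    then show ?thesis by simp
  qed
  define L0 where "L0 = (2::real)^K0"
  define tt where "tt k = nat \<bar>int k - int K0\<bar>" for k :: nat
  define Dl where "Dl k = 80 * sqrt (real d+1) * sqrt L0 * (7/8)^(tt k)" for k
  have Dl0: "Dl k > 0" for k unfolding Dl_def L0_def by simp
  define Ak where "Ak k b = {a \<in> grid d N. (2::int)^k dvd pos N b a \<and> progression a b (2^k) \<subseteq> grid d N}" for k b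
  define I where "I = Sigma {1..N} (\<lambda>k. Sigma (Bk d N k) (\<lambda>b. Ak k b))"
  define P where "P k b a = progression a b (2^k) \<inter> X" for k b a
  define Yf where "Yf = (\<lambda>(k::nat,b::int list,a::int list). Yb (P k b a) (Dl k))"
  define al where "al k = 100 * exp (-(Dl k^2)/(4*2^k)) / Dl k^2" for k
  have al0: "al k \<ge> 0" for k unfolding al_def by simp
  have finAk: "finite (Ak k b)" for k b unfolding Ak_def using finite_grid by simp
  have finBk: "finite (Bk d N k)" if "k \<ge> 1" for k using Bk_card[OF that N] by blast
  have finI: "finite I" unfolding I_def using finAk finBk by (intro finite_SigmaI) auto
  have entb: "ent (Om X) (Yf (k,b,a)) \<le> al k * real (card (P k b a))" for k b a
  proof -
    have s: "real (card (P k b a)) \<le> 2^k"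
    proof -
      have "card (P k b a) \<le> card (progression a b (2^k))" unfolding P_def by (rule card_mono[OF finite_progression]) auto
      also have "\<dots> \<le> 2^k" by (rule card_progression)
      finally have "real (card (P k b a)) \<le> real ((2::nat)^k)" by (simp only: of_nat_le_iff)
      then show ?thesis by simp
    qed
    have "ent (Om X) (Yb (P k b a) (Dl k)) \<le> 100 * (real (card (P k b a)) / (Dl k)^2) * exp (- ((Dl k)^2) / (4*2^k))"
      by (rule block_ent[OF finX _ s Dl0]) (auto simp: P_def)
    then show ?thesis unfolding Yf_def al_def by (simp add: field_simps)
  qed
  have disj: "(\<Sum>a\<in>Ak k b. real (card (P k b a))) \<le> real n" if b: "b \<in> Bk d N k" for k b
  proof -
    have bl: "length b = d" "b \<noteq> replicate d 0" using b unfolding Bk_def by auto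
    have "(\<Sum>a\<in>Ak k b. card (P k b a)) = card (\<Union>a\<in>Ak k b. P k b a)"
    proof (rule card_UN_disjoint[symmetric])
      show "finite (Ak k b)" by (rule finAk)
      show "\<forall>a\<in>Ak k b. finite (P k b a)" unfolding P_def using finX by auto
      show "\<forall>a\<in>Ak k b. \<forall>a'\<in>Ak k b. a \<noteq> a' \<longrightarrow> P k b a \<inter> P k b a' = {}"
      proof (intro ballI impI)
        fix a a' assume a: "a \<in> Ak k b" and a': "a' \<in> Ak k b" and ne: "a \<noteq> a'"
        have "progression a b (2^k) \<inter> progression a' b (2^k) = {}"
          using a a' ne unfolding Ak_def by (intro blocks_disjoint[OF _ _ bl]) auto
        then show "P k b a \<inter> P k b a' = {}" unfolding P_def by blast
      qed
    qed
    also have "\<dots> \<le> card X" by (rule card_mono[OF finX]) (auto simp: P_def)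
    finally have "(\<Sum>a\<in>Ak k b. card (P k b a)) \<le> n" unfolding n_def .
    then have "real (\<Sum>a\<in>Ak k b. card (P k b a)) \<le> real n" by (simp only: of_nat_le_iff)
    then show ?thesis by simp
  qed
  have lev: "al k * real (card (Bk d N k)) \<le> (1/20) * (2/3)^(tt k)" if k: "k \<ge> 1" for k
  proof -
    have c: "real (card (Bk d N k)) \<le> (5 * real N / 2^k)^d" using Bk_card[OF k N] by blast
    have "al k * real (card (Bk d N k)) \<le> al k * (5 * real N / 2^k)^d" using c al0 by (rule mult_left_mono)
    also have "\<dots> \<le> (1/20) * (2/3)^(tt k)"
      using level_budget[OF d KK, of k] unfolding al_def Dl_def L0_def tt_def by simp
    finally show ?thesis .
  qed
  have entsum: "(\<Sum>i\<in>I. ent (Om X) (Yf i)) \<le> real n / 4"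
  proof -
    have "(\<Sum>i\<in>I. ent (Om X) (Yf i)) = (\<Sum>k\<in>{1..N}. \<Sum>ba\<in>Sigma (Bk d N k) (Ak k). ent (Om X) (Yf (k,ba)))"
      unfolding I_def by (subst sum.Sigma) (use finBk finAk in \<open>auto intro!: finite_SigmaI\<close>)
    also have "\<dots> = (\<Sum>k\<in>{1..N}. \<Sum>b\<in>Bk d N k. \<Sum>a\<in>Ak k b. ent (Om X) (Yf (k,b,a)))"
      by (rule sum.cong[OF refl], subst sum.Sigma) (use finBk finAk in auto)
    also have "\<dots> \<le> (\<Sum>k\<in>{1..N}. \<Sum>b\<in>Bk d N k. al k * real n)"
    proof (intro sum_mono)
      fix k b assume k: "k \<in> {1..N}" and b: "b \<in> Bk d N k"
      have "(\<Sum>a\<in>Ak k b. ent (Om X) (Yf (k,b,a))) \<le> (\<Sum>a\<in>Ak k b. al k * real (card (P k b a)))"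
        by (rule sum_mono) (rule entb)
      also have "\<dots> = al k * (\<Sum>a\<in>Ak k b. real (card (P k b a)))" by (simp add: sum_distrib_left)
      also have "\<dots> \<le> al k * real n" using disj[OF b] al0 by (intro mult_left_mono) auto
      finally show "(\<Sum>a\<in>Ak k b. ent (Om X) (Yf (k,b,a))) \<le> al k * real n" .
    qed
    also have "\<dots> = (\<Sum>k\<in>{1..N}. (al k * real (card (Bk d N k))) * real n)" by (simp add: algebra_simps)
    also have "\<dots> \<le> (\<Sum>k\<in>{1..N}. (1/20) * (2/3)^(tt k) * real n)"
      by (intro sum_mono mult_right_mono lev) auto
    also have "\<dots> = (1/20) * real n * (\<Sum>k\<in>{1..N}. (2/3)^(tt k))" by (simp add: sum_distrib_left algebra_simps)
    also have "\<dots> \<le> (1/20) * real n * 5"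
    proof -
      have "(\<Sum>k\<in>{1..N}. ((2::real)/3)^(tt k)) \<le> (1 + 2/3)/(1 - 2/3)" unfolding tt_def by (rule level_sum) auto
      then show ?thesis by (intro mult_left_mono) auto
    qed
    finally show ?thesis by simp
  qed
  define YF where "YF \<omega> = (\<lambda>i. if i \<in> I then Yf i \<omega> else 0)" for \<omega>
  have entF: "ent (Om X) YF \<le> real n / 4"
    using ent_family[OF finite_Om[OF finX] Om_ne finI, of Yf] entsum unfolding YF_def by simp
  obtain \<omega>0 where w0: "\<omega>0 \<in> Om X" and cw0: "real (cnt (Om X) YF \<omega>0) \<ge> card (Om X) * exp (- ent (Om X) YF)"
    using ent_big_class[OF finite_Om[OF finX] Om_ne] by blast
  define C where "C = {\<omega>\<in>Om X. YF \<omega> = YF \<omega>0}"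
  have cardC: "real (card C) \<ge> 2^n * exp (- real n / 4)"
  proof -
    have "card (Om X) = 2^n" unfolding n_def by (rule card_Om[OF finX])
    then have a: "real (card C) \<ge> 2^n * exp (- ent (Om X) YF)" using cw0 unfolding C_def cnt_def by simp
    have "exp (- real n / 4) \<le> exp (- ent (Om X) YF)" using entF by simp
    then have "2^n * exp (- real n / 4) \<le> 2^n * exp (- ent (Om X) YF)" by (intro mult_left_mono) auto
    then show ?thesis using a by linarith
  qed
  have "\<exists>\<omega>1\<in>C. n \<le> 10 * card {x\<in>X. \<omega>1 x \<noteq> \<omega>0 x}"
  proof (rule ccontr)
    assume "\<not> ?thesis"
    then have h: "\<forall>\<omega>\<in>C. 10 * card {x\<in>X. \<omega> x \<noteq> \<omega>0 x} < n" by auto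
    define m where "m = (n - 1) div 10"
    have m10: "10 * m \<le> n" unfolding m_def by simp
    have sub: "C \<subseteq> {\<omega>\<in>Om X. card {x\<in>X. \<omega> x \<noteq> \<omega>0 x} \<le> m}"
    proof
      fix \<omega> assume w: "\<omega> \<in> C"
      have "10 * card {x\<in>X. \<omega> x \<noteq> \<omega>0 x} < n" using h w by blast
      then have "card {x\<in>X. \<omega> x \<noteq> \<omega>0 x} \<le> m" unfolding m_def by linarith
      then show "\<omega> \<in> {\<omega>\<in>Om X. card {x\<in>X. \<omega> x \<noteq> \<omega>0 x} \<le> m}" using w unfolding C_def by simp
    qed
    have "card C \<le> card {\<omega>\<in>Om X. card {x\<in>X. \<omega> x \<noteq> \<omega>0 x} \<le> m}"
      by (rule card_mono[OF _ sub]) (use finite_Om[OF finX] in simp)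
    also have "\<dots> \<le> (\<Sum>k\<le>m. card X choose k)" by (rule ball_card[OF finX w0])
    finally have "real (card C) \<le> real (\<Sum>k\<le>m. n choose k)" unfolding n_def by (simp only: of_nat_le_iff)
    also have "\<dots> \<le> 9^m * (10/9)^n" by (rule binom_tail)
    finally have "real (card C) \<le> 9^m * (10/9)^n" .
    then show False using cardC numeric_contra[OF n1 m10] by linarith
  qed
  then obtain \<omega>1 where w1C: "\<omega>1 \<in> C" and far: "n \<le> 10 * card {x\<in>X. \<omega>1 x \<noteq> \<omega>0 x}" by blast
  have w1: "\<omega>1 \<in> Om X" and YFeq: "YF \<omega>1 = YF \<omega>0" using w1C unfolding C_def by auto
  define \<chi> where "\<chi> x = (if x \<in> X then (\<omega>1 x - \<omega>0 x) div 2 else 0)" for x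
  have chi_vals: "\<chi> x \<in> {-1,0,1} \<and> real_of_int (\<chi> x) = (real_of_int (\<omega>1 x) - real_of_int (\<omega>0 x))/2
      \<and> (\<chi> x \<noteq> 0 \<longleftrightarrow> \<omega>1 x \<noteq> \<omega>0 x)" if x: "x \<in> X" for x
    using Om_val[OF w1 x] Om_val[OF w0 x] x unfolding \<chi>_def by auto
  have chi_out: "\<chi> x = 0" if "x \<notin> X" for x unfolding \<chi>_def using that by simp
  have chi_Zs: "real_of_int (chi_sum \<chi> S) = (Zs S \<omega>1 - Zs S \<omega>0)/2" if S: "S \<subseteq> X" for S
  proof -
    have "real_of_int (chi_sum \<chi> S) = (\<Sum>x\<in>S. (real_of_int (\<omega>1 x) - real_of_int (\<omega>0 x))/2)"
      unfolding chi_sum_def of_int_sum by (rule sum.cong) (use chi_vals S in auto)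
    also have "\<dots> = (Zs S \<omega>1 - Zs S \<omega>0)/2" unfolding Zs_def by (simp only: sum_divide_distrib[symmetric] sum_subtractf)
    finally show ?thesis .
  qed
  have blockI: "\<bar>real_of_int (chi_sum \<chi> (P k b a))\<bar> < Dl k" if "(k,b,a) \<in> I" for k b a
  proof -
    have "Yf (k,b,a) \<omega>1 = Yf (k,b,a) \<omega>0" using fun_cong[OF YFeq, of "(k,b,a)"] that unfolding YF_def by simp
    then have "\<lfloor>(Zs (P k b a) \<omega>1 + Dl k)/(2*Dl k)\<rfloor> = \<lfloor>(Zs (P k b a) \<omega>0 + Dl k)/(2*Dl k)\<rfloor>"
      unfolding Yf_def Yb_def by simp
    then have "\<bar>Zs (P k b a) \<omega>1 - Zs (P k b a) \<omega>0\<bar> < 2 * Dl k" by (rule floor_close[OF Dl0])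
    moreover have "real_of_int (chi_sum \<chi> (P k b a)) = (Zs (P k b a) \<omega>1 - Zs (P k b a) \<omega>0)/2"
      by (rule chi_Zs) (auto simp: P_def)
    ultimately show ?thesis by simp
  qed
  have chi_abs: "\<bar>real_of_int (\<chi> x)\<bar> \<le> 1" for x
  proof (cases "x \<in> X")
    case True then show ?thesis using chi_vals[OF True] by auto
  next
    case False then show ?thesis using chi_out by simp
  qed
  have sumDl: "(\<Sum>k\<in>{1..N}. Dl k) \<le> 1200 * sqrt (real d + 1) * sqrt L0"
  proof -
    have "(\<Sum>k\<in>{1..N}. Dl k) = 80 * sqrt (real d+1) * sqrt L0 * (\<Sum>k\<in>{1..N}. (7/8)^(tt k))"
      unfolding Dl_def by (simp add: sum_distrib_left)
    also have "\<dots> \<le> 80 * sqrt (real d+1) * sqrt L0 * 15"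
    proof -
      have "(\<Sum>k\<in>{1..N}. ((7::real)/8)^(tt k)) \<le> (1 + 7/8)/(1 - 7/8)" unfolding tt_def by (rule level_sum) auto
      then show ?thesis unfolding L0_def by (intro mult_left_mono) auto
    qed
    finally show ?thesis by simp
  qed
  have AP: "real_of_int \<bar>chi_sum \<chi> (A0 \<inter> X)\<bar> \<le> 2 + 2400 * sqrt (real d + 1) * sqrt L0" if A0: "A0 \<in> APs d N" for A0
  proof -
    obtain a b l where A0e: "A0 = progression a b l" and la: "length a = d" and lb: "length b = d"
       and bnz: "b \<noteq> replicate d 0" and l1: "l \<ge> 1" and sub: "progression a b l \<subseteq> grid d N"
      using A0 unfolding APs_def by blast
    have lab: "length a = length b" using la lb by simp
    have br: "b \<noteq> replicate (length b) 0" using bnz lb by simp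
    have ptg: "pt a b (int i) \<in> grid d N" if "i < l" for i using sub that unfolding progression_eq by auto
    have ag: "a \<in> grid d N" using ptg[of 0] l1 pt_0[OF lab] by simp
    have posa: "0 \<le> pos N b a" using pos_grid[OF ag lb bnz] by simp
    define t0 where "t0 = nat (pos N b a)"
    have t0e: "int t0 = pos N b a" using posa unfolding t0_def by simp
    have posi: "pos N b (pt a b (int i)) = int t0 + int i" for i using pos_pt[OF lab br] t0e by simp
    have t0l: "t0 + l \<le> N"
    proof -
      have "pos N b (pt a b (int (l-1))) \<le> int N - 1" using pos_grid[OF ptg[of "l-1"] lb bnz] l1 by simp
      then show ?thesis using posi[of "l-1"] l1 by simp
    qed
    define f where "f j = real_of_int (\<chi> (pt a b (int j - int t0)))" for j
    have sumA: "real_of_int (chi_sum \<chi> (A0 \<inter> X)) = (\<Sum>j\<in>{t0..<t0+l}. f j)"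
    proof -
      have "chi_sum \<chi> (A0 \<inter> X) = (\<Sum>x\<in>A0. \<chi> x)"
        unfolding chi_sum_def A0e using chi_out by (intro sum.mono_neutral_left finite_progression) auto
      also have "\<dots> = (\<Sum>i<l. \<chi> (pt a b (int i)))" unfolding A0e by (rule sum_progression[OF lab br])
      finally have "real_of_int (chi_sum \<chi> (A0 \<inter> X)) = (\<Sum>i<l. real_of_int (\<chi> (pt a b (int i))))" by simp
      also have "\<dots> = (\<Sum>i\<in>{0..<l}. f (i + t0))" unfolding f_def by (simp add: lessThan_atLeast0)
      also have "\<dots> = (\<Sum>j\<in>{0+t0..<l+t0}. f j)" by (rule sum.shift_bounds_nat_ivl[symmetric])
      finally show ?thesis by (simp add: add.commute)
    qed
    define \<beta> where "\<beta> k = (if k = 0 then 1 else Dl k)" for k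
    have b0: "\<beta> k \<ge> 0" for k unfolding \<beta>_def using Dl0[of k] by simp
    have blk: "\<bar>\<Sum>j\<in>{m*2^k..<(m+1)*2^k}. f j\<bar> \<le> \<beta> k" if mk: "t0 \<le> m*2^k" "(m+1)*2^k \<le> t0 + l" for k m
    proof (cases "k = 0")
      case True
      then show ?thesis unfolding \<beta>_def f_def using chi_abs by simp
    next
      case False
      define i0 where "i0 = m*2^k - t0"
      have i0l: "i0 + 2^k \<le> l" unfolding i0_def using mk by (simp add: algebra_simps)
      define a' where "a' = pt a b (int i0)"
      have la': "length a' = length b" unfolding a'_def using lab by (simp add: len_pt)
      have pta': "pt a' b (int i) = pt a b (int (i0 + i))" for i unfolding a'_def using lab by (simp add: pt_pt)
      have sumeq: "(\<Sum>j\<in>{m*2^k..<(m+1)*2^k}. f j) = real_of_int (chi_sum \<chi> (P k b a'))"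
      proof -
        have "chi_sum \<chi> (P k b a') = (\<Sum>x\<in>progression a' b (2^k). \<chi> x)"
          unfolding chi_sum_def P_def using chi_out by (intro sum.mono_neutral_left finite_progression) auto
        also have "\<dots> = (\<Sum>i<2^k. \<chi> (pt a' b (int i)))" by (rule sum_progression[OF la' br])
        finally have "real_of_int (chi_sum \<chi> (P k b a')) = (\<Sum>i<2^k. real_of_int (\<chi> (pt a b (int (i0 + i)))))"
          using pta' by simp
        also have "\<dots> = (\<Sum>i\<in>{0..<2^k}. f (i + m*2^k))"
        proof (rule sum.cong)
          show "{..<2^k} = {0..<(2::nat)^k}" by (simp add: lessThan_atLeast0)
        next
          fix i assume "i \<in> {0..<(2::nat)^k}"
          have "int (i0 + i) = int (i + m*2^k) - int t0" unfolding i0_def using mk by simp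
          then show "real_of_int (\<chi> (pt a b (int (i0 + i)))) = f (i + m*2^k)" unfolding f_def by (simp only:)
        qed
        also have "\<dots> = (\<Sum>j\<in>{0+m*2^k..<2^k+m*2^k}. f j)" by (rule sum.shift_bounds_nat_ivl[symmetric])
        finally show ?thesis by (simp add: algebra_simps)
      qed
      have inI: "(k,b,a') \<in> I"
      proof -
        have kl: "2^k \<le> l" using i0l by simp
        have kN: "k \<le> N"
        proof -
          have "k < 2^k" by simp
          then show ?thesis using kl t0l by linarith
        qed
        have k1: "k \<ge> 1" using False by simp
        have gr: "pt a' b (int i) \<in> grid d N" if "i < 2^k" for i using pta' ptg[of "i0 + i"] that i0l by simp
        have a'g: "a' \<in> grid d N" using gr[of 0] pt_0[OF la'] by simp
        have bB: "b \<in> Bk d N k"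
        proof -
          have "(2^k - 1) * \<bar>b!c\<bar> \<le> int N - 1" if c: "c < d" for c
          proof -
            have g1: "1 \<le> a'!c \<and> a'!c \<le> int N" by (rule grid_coord[OF a'g c])
            have g2: "1 \<le> pt a' b (int (2^k - 1)) ! c \<and> pt a' b (int (2^k - 1)) ! c \<le> int N"
              by (rule grid_coord[OF gr c]) simp
            have e: "pt a' b (int (2^k - 1)) ! c = a'!c + (2^k - 1) * b!c"
              using c la' lb by (simp add: nth_pt of_nat_diff)
            have "\<bar>(2^k - 1) * b!c\<bar> \<le> int N - 1" using g1 g2 e by linarith
            moreover have "\<bar>(2^k - 1) * b!c\<bar> = (2^k - 1) * \<bar>b!c\<bar>"
              by (simp add: abs_mult)
            ultimately show ?thesis by simp
          qed
          then show ?thesis unfolding Bk_def using lb bnz by simp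
        qed
        have aA: "a' \<in> Ak k b"
        proof -
          have "pos N b a' = int (m*2^k)" unfolding a'_def using posi[of i0] unfolding i0_def using mk by simp
          then have "(2::int)^k dvd pos N b a'" by simp
          moreover have "progression a' b (2^k) \<subseteq> grid d N" unfolding progression_eq using gr by auto
          ultimately show ?thesis unfolding Ak_def using a'g by simp
        qed
        show ?thesis unfolding I_def using k1 kN bB aA by simp
      qed
      show ?thesis using blockI[OF inI] sumeq False unfolding \<beta>_def by simp
    qed
    interpret dy: dyad f \<beta> t0 "t0 + l"
      by unfold_locales (use b0 blk in auto)
    have "\<bar>\<Sum>j\<in>{t0..<t0+l}. f j\<bar> \<le> \<beta> N + 2 * (\<Sum>k<N. \<beta> k)"
    proof (rule dy.dyadic)
      show "t0 \<le> t0 + l" by simp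
      have "N < 2^N" by simp
      then show "t0 + l \<le> 2^N" using t0l by linarith
    qed
    also have "\<dots> \<le> 2 * (\<Sum>k<Suc N. \<beta> k)" using b0[of N] by simp
    also have "(\<Sum>k<Suc N. \<beta> k) = 1 + (\<Sum>k\<in>{1..N}. Dl k)"
    proof -
      have "{..<Suc N} = insert 0 {1..N}" by auto
      then have "(\<Sum>k<Suc N. \<beta> k) = \<beta> 0 + (\<Sum>k\<in>{1..N}. \<beta> k)" by simp
      also have "(\<Sum>k\<in>{1..N}. \<beta> k) = (\<Sum>k\<in>{1..N}. Dl k)" unfolding \<beta>_def by (rule sum.cong) auto
      finally show ?thesis unfolding \<beta>_def by simp
    qed
    finally have "\<bar>\<Sum>j\<in>{t0..<t0+l}. f j\<bar> \<le> 2 * (1 + (\<Sum>k\<in>{1..N}. Dl k))" .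
    then show ?thesis using sumA sumDl by simp
  qed
  have final: "2 + 2400 * sqrt (real d + 1) * sqrt L0 \<le> (500 * real d + 10^6) * real N powr (real d / (2 * real d + 2))"
    using final_numeric[OF N L0_bound[OF N K0b]] unfolding L0_def .
  show ?thesis
  proof (intro exI conjI ballI)
    fix x assume "x \<in> X" then show "\<chi> x \<in> {-1,0,1}" using chi_vals by blast
  next
    have "{x\<in>X. \<chi> x \<noteq> 0} = {x\<in>X. \<omega>1 x \<noteq> \<omega>0 x}" using chi_vals by blast
    then have "real n \<le> 10 * real (card {x\<in>X. \<chi> x \<noteq> 0})" using far by (simp flip: of_nat_le_iff)
    then show "real (card {x\<in>X. \<chi> x \<noteq> 0}) \<ge> real (card X) / 10" unfolding n_def by simp
  next
    fix A0 assume "A0 \<in> APs d N"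
    then show "real_of_int \<bar>chi_sum \<chi> (A0 \<inter> X)\<bar> \<le> (500 * real d + 10^6) * real N powr (real d / (2 * real d + 2))"
      using AP final by (meson order_trans)
  qed
qed


theorem proposition3p4:
  fixes d N :: nat and X :: "int list set"
  assumes "N \<ge> 1" and "X \<subseteq> grid d N"
  shows "\<exists>\<chi> :: int list \<Rightarrow> int.
           (\<forall>x\<in>X. \<chi> x \<in> {-1, 0, 1}) \<and>
           real (card {x\<in>X. \<chi> x \<noteq> 0}) \<ge> real (card X) / 10 \<and>
           (\<forall>A0\<in>APs d N. real_of_int \<bar>chi_sum \<chi> (A0 \<inter> X)\<bar>
              \<le> (500 * real d + 10^6) * real N powr (real d / (2 * real d + 2)))"
proof (cases "d \<ge> 1 \<and> X \<noteq> {}")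
  case True
  then show ?thesis using main_case[OF assms] by blast
next
  case False
  show ?thesis
  proof (intro exI[of _ "\<lambda>_. 1"] conjI ballI)
    fix x assume "x \<in> X" then show "(1::int) \<in> {-1, 0, 1}" by simp
  next
    show "real (card {x\<in>X. (1::int) \<noteq> 0}) \<ge> real (card X) / 10" by simp
  next
    fix A0 assume A0: "A0 \<in> APs d N"
    show "real_of_int \<bar>chi_sum (\<lambda>_. 1) (A0 \<inter> X)\<bar> \<le> (500 * real d + 10^6) * real N powr (real d / (2 * real d + 2))"
    proof (cases "X = {}")
      case True
      then show ?thesis by (simp add: chi_sum_def)
    next
      case Xne: False
      then have "d = 0" using False by simp
      then have "APs d N = {}" unfolding APs_def by auto
      then show ?thesis using A0 by simp
    qed
  qed
qed


end
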